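(* The $R$-algebra $\mathcal H_{n,r}$ is isomorphic to the $R$-algebra with generators $t_1,\ldots,t_n,g_1,\ldots,g_{n-1}$ and defining relations (1) $(t_i-u_1)\cdots(t_i-u_r)=0$ for $1\le i\le n$; (2) $t_it_j=t_jt_i$ for $1\le i,j\le n$; (3) $g_jt_i=t_{s_j(i)}g_j$ for $1\le j\le n-1$, $1\le i\le n$; (4) $g_ig_j=g_jg_i$ for $|i-j|>1$; (5) $g_ig_{i+1}g_i=g_{i+1}g_ig_{i+1}$ for $1\le i\le n-2$; (6) $g_i^2=1+(q-q^{-1})e_ig_i$ for $1\le i\le n-1$, where in the presented algebra $e_i:=\sum_{\mathbf k\in[1,r]^n,\ k_i=k_{i+1}}b_{\mathbf k}$ with $b_{\mathbf k}:=\prod_{i=1}^n\prod_{1\le j\le r,\,j\ne k_i}\frac{t_i-u_j}{u_{k_i}-u_j}$; the isomorphism sends $t_i\mapsto t_i$ and $g_i\mapsto T_i+B'_{i,i+1}$.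
   Context: Standing setup: $R$ is an integral domain, $n\ge 1$, $r\ge 1$, and $q,u_1,\ldots,u_r\in R$ with $q$ invertible in $R$ and $\Delta:=\prod_{1\le j<i\le r}(u_i-u_j)$ invertible in $R$. For $1\le c\le r$ let $F_c(X)\in R[X]$ be the unique polynomial of degree $\le r-1$ with $F_c(u_{c'})=\delta_{c,c'}\Delta$ for all $1\le c'\le r$. The modified Ariki–Koike (Shoji) algebra $\mathcal H_{n,r}=\mathcal H_{n,r}(R,q,u_1,\ldots,u_r)$ is the associative $R$-algebra generated by $t_1,\ldots,t_n,T_1,\ldots,T_{n-1}$ subject to: $(T_i-q)(T_i+q^{-1})=0$; $(t_i-u_1)\cdots(t_i-u_r)=0$; $T_iT_{i+1}T_i=T_{i+1}T_iT_{i+1}$; $T_iT_j=T_jT_i$ for $|i-j|\ge2$; $t_it_j=t_jt_i$; $T_jt_k=t_kT_j$ for $k\ne j,j+1$; and for $2\le j\le n$: $T_{j-1}t_j=t_{j-1}T_{j-1}+\Delta^{-2}\sum_{1\le c_1<c_2\le r}(u_{c_2}-u_{c_1})(q-q^{-1})F_{c_1}(t_{j-1})F_{c_2}(t_j)$ and $T_{j-1}t_{j-1}=t_jT_{j-1}-\Delta^{-2}\sum_{1\le c_1<c_2\le r}(u_{c_2}-u_{c_1})(q-q^{-1})F_{c_1}(t_{j-1})F_{c_2}(t_j)$. Write $[1,r]=\{1,\ldots,r\}$ and, in $\mathcal H_{n,r}$, $b_{\mathbf k}:=\prod_{i=1}^n\prod_{1\le j\le r,\,j\ne k_i}\frac{t_i-u_j}{u_{k_i}-u_j}$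 for $\mathbf k\in[1,r]^n$ and $B'_{i,j}:=-(q-q^{-1})\sum_{\mathbf k,\ k_i<k_j}b_{\mathbf k}$. $s_j=(j\ j+1)\in\mathfrak S(n)$. *)

theory Defs
  imports "HOL-Library.Poly_Mapping" "HOL-Library.FuncSet" "HOL-Computational_Algebra.Polynomial"
begin

text \<open>Elements of the free algebra on generators of type 'g: finitely supported
  R-linear combinations of words (lists of generators).\<close>

type_synonym ('g, 'a) nc = "'g list \<Rightarrow>\<^sub>0 'a"

definition ncmul :: "('g, 'a::comm_ring_1) nc \<Rightarrow> ('g, 'a) nc \<Rightarrow> ('g, 'a) nc" where
  "ncmul p q = (\<Sum>v\<in>Poly_Mapping.keys p. \<Sum>w\<in>Poly_Mapping.keys q. Poly_Mapping.single (v @ w) (Poly_Mapping.lookup p v * Poly_Mapping.lookup q w))"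

definition ncconst :: "'a::comm_ring_1 \<Rightarrow> ('g, 'a) nc" where
  "ncconst c = Poly_Mapping.single [] c"

definition ncword :: "'g list \<Rightarrow> ('g, 'a::comm_ring_1) nc" where
  "ncword w = Poly_Mapping.single w 1"

definition ncgen :: "'g \<Rightarrow> ('g, 'a::comm_ring_1) nc" where
  "ncgen g = ncword [g]"

definition ncprod :: "('g, 'a::comm_ring_1) nc list \<Rightarrow> ('g, 'a) nc" where
  "ncprod xs = foldr ncmul xs (ncconst 1)"

definition ncpow :: "('g, 'a::comm_ring_1) nc \<Rightarrow> nat \<Rightarrow> ('g, 'a) nc" where
  "ncpow x k = ncprod (replicate k x)"

definition ncpoly :: "'a::comm_ring_1 poly \<Rightarrow> ('g, 'a) nc \<Rightarrow> ('g, 'a) nc" where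
  "ncpoly p x = (\<Sum>i\<le>degree p. ncmul (ncconst (coeff p i)) (ncpow x i))"

text \<open>The subalgebra of the free algebra spanned by words over the generator set S
  (= the free algebra on S).\<close>
definition fa_on :: "'g set \<Rightarrow> ('g, 'a::zero) nc set" where
  "fa_on S = {x. \<forall>w\<in>Poly_Mapping.keys x. set w \<subseteq> S}"

inductive_set nc_ideal :: "'g set \<Rightarrow> ('g, 'a::comm_ring_1) nc set \<Rightarrow> ('g, 'a) nc set"
  for S :: "'g set" and Rel :: "('g, 'a) nc set" where
  zero: "0 \<in> nc_ideal S Rel"
| add: "x \<in> nc_ideal S Rel \<Longrightarrow> y \<in> nc_ideal S Rel \<Longrightarrow> x + y \<in> nc_ideal S Rel"
| gen: "set v \<subseteq> S \<Longrightarrow> set w \<subseteq> S \<Longrightarrow> \<rho> \<in> Rel \<Longrightarrow>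
          ncmul (ncconst c) (ncmul (ncword v) (ncmul \<rho> (ncword w))) \<in> nc_ideal S Rel"

definition nc_subst :: "('g \<Rightarrow> ('h, 'a::comm_ring_1) nc) \<Rightarrow> ('g, 'a) nc \<Rightarrow> ('h, 'a) nc" where
  "nc_subst f p = (\<Sum>w\<in>Poly_Mapping.keys p. ncmul (ncconst (Poly_Mapping.lookup p w)) (ncprod (map f w)))"

definition ring_inv :: "'a::comm_ring_1 \<Rightarrow> 'a" where
  "ring_inv x = (THE y. x * y = 1)"

definition Delta :: "(nat \<Rightarrow> 'a::comm_ring_1) \<Rightarrow> nat \<Rightarrow> 'a" where
  "Delta u r = (\<Prod>j\<in>{1..r}. \<Prod>i\<in>{j<..r}. (u i - u j))"

definition Fpoly :: "(nat \<Rightarrow> 'a::comm_ring_1) \<Rightarrow> nat \<Rightarrow> nat \<Rightarrow> 'a poly" where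
  "Fpoly u r c = (THE p. degree p \<le> r - 1 \<and>
      (\<forall>c'\<in>{1..r}. poly p (u c') = (if c = c' then Delta u r else 0)))"

definition sw :: "nat \<Rightarrow> nat \<Rightarrow> nat" where
  "sw j i = (if i = j then Suc j else if i = Suc j then j else i)"

definition Kset :: "nat \<Rightarrow> nat \<Rightarrow> (nat \<Rightarrow> nat) set" where
  "Kset n r = (\<Pi>\<^sub>E i\<in>{1..n}. {1..r})"

text \<open>b_k, for elements tg i playing the role of t_i (factors multiplied in increasing order
  of i, then j; these factors commute modulo the relations).\<close>
definition bk :: "(nat \<Rightarrow> 'a::comm_ring_1) \<Rightarrow> nat \<Rightarrow> nat \<Rightarrow> (nat \<Rightarrow> ('g, 'a) nc) \<Rightarrow> (nat \<Rightarrow> nat) \<Rightarrow> ('g, 'a) nc" where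
  "bk u r n tg k = ncprod (map (\<lambda>i. ncprod (map (\<lambda>j.
        ncmul (ncconst (ring_inv (u (k i) - u j))) (tg i - ncconst (u j)))
        (filter (\<lambda>j. j \<noteq> k i) [1..<Suc r]))) [1..<Suc n])"

definition eel :: "(nat \<Rightarrow> 'a::comm_ring_1) \<Rightarrow> nat \<Rightarrow> nat \<Rightarrow> (nat \<Rightarrow> ('g, 'a) nc) \<Rightarrow> nat \<Rightarrow> ('g, 'a) nc" where
  "eel u r n tg i = (\<Sum>k\<in>{k\<in>Kset n r. k i = k (Suc i)}. bk u r n tg k)"

definition Bprime :: "(nat \<Rightarrow> 'a::comm_ring_1) \<Rightarrow> nat \<Rightarrow> nat \<Rightarrow> 'a \<Rightarrow> (nat \<Rightarrow> ('g, 'a) nc) \<Rightarrow> nat \<Rightarrow> nat \<Rightarrow> ('g, 'a) nc" where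
  "Bprime u r n q tg i j = ncmul (ncconst (- (q - ring_inv q)))
      (\<Sum>k\<in>{k\<in>Kset n r. k i < k j}. bk u r n tg k)"

datatype hgen = Ht nat | HT nat

definition Hgens :: "nat \<Rightarrow> hgen set" where
  "Hgens n = Ht ` {1..n} \<union> HT ` {1..n-1}"

definition Hcorr :: "(nat \<Rightarrow> 'a::comm_ring_1) \<Rightarrow> nat \<Rightarrow> 'a \<Rightarrow> nat \<Rightarrow> (hgen, 'a) nc" where
  "Hcorr u r q j = ncmul (ncconst (ring_inv (Delta u r) ^ 2))
     (\<Sum>(c1, c2)\<in>{(c1, c2). 1 \<le> c1 \<and> c1 < c2 \<and> c2 \<le> r}.
        ncmul (ncconst ((u c2 - u c1) * (q - ring_inv q)))
          (ncmul (ncpoly (Fpoly u r c1) (ncgen (Ht (j - 1)))) (ncpoly (Fpoly u r c2) (ncgen (Ht j)))))"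

definition Hrels :: "(nat \<Rightarrow> 'a::comm_ring_1) \<Rightarrow> nat \<Rightarrow> nat \<Rightarrow> 'a \<Rightarrow> (hgen, 'a) nc set" where
  "Hrels u r n q =
     {\<rho>. \<exists>i\<in>{1..n-1}. \<rho> = ncmul (ncgen (HT i) - ncconst q) (ncgen (HT i) + ncconst (ring_inv q))}
   \<union> {\<rho>. \<exists>i\<in>{1..n}. \<rho> = ncprod (map (\<lambda>c. ncgen (Ht i) - ncconst (u c)) [1..<Suc r])}
   \<union> {\<rho>. \<exists>i\<in>{1..n-2}. \<rho> = ncprod [ncgen (HT i), ncgen (HT (Suc i)), ncgen (HT i)]
                              - ncprod [ncgen (HT (Suc i)), ncgen (HT i), ncgen (HT (Suc i))]}
   \<union> {\<rho>. \<exists>i\<in>{1..n-1}. \<exists>j\<in>{1..n-1}. (i + 2 \<le> j \<or> j + 2 \<le> i) \<and>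
          \<rho> = ncmul (ncgen (HT i)) (ncgen (HT j)) - ncmul (ncgen (HT j)) (ncgen (HT i))}
   \<union> {\<rho>. \<exists>i\<in>{1..n}. \<exists>j\<in>{1..n}.
          \<rho> = ncmul (ncgen (Ht i)) (ncgen (Ht j)) - ncmul (ncgen (Ht j)) (ncgen (Ht i))}
   \<union> {\<rho>. \<exists>j\<in>{1..n-1}. \<exists>k\<in>{1..n}. k \<noteq> j \<and> k \<noteq> Suc j \<and>
          \<rho> = ncmul (ncgen (HT j)) (ncgen (Ht k)) - ncmul (ncgen (Ht k)) (ncgen (HT j))}
   \<union> {\<rho>. \<exists>j\<in>{2..n}.
          \<rho> = ncmul (ncgen (HT (j - 1))) (ncgen (Ht j)) - ncmul (ncgen (Ht (j - 1))) (ncgen (HT (j - 1)))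
                - Hcorr u r q j}
   \<union> {\<rho>. \<exists>j\<in>{2..n}.
          \<rho> = ncmul (ncgen (HT (j - 1))) (ncgen (Ht (j - 1))) - ncmul (ncgen (Ht j)) (ncgen (HT (j - 1)))
                + Hcorr u r q j}"

datatype pgen = Pt nat | Pg nat

definition Pgens :: "nat \<Rightarrow> pgen set" where
  "Pgens n = Pt ` {1..n} \<union> Pg ` {1..n-1}"

definition Prels :: "(nat \<Rightarrow> 'a::comm_ring_1) \<Rightarrow> nat \<Rightarrow> nat \<Rightarrow> 'a \<Rightarrow> (pgen, 'a) nc set" where
  "Prels u r n q =
     {\<rho>. \<exists>i\<in>{1..n}. \<rho> = ncprod (map (\<lambda>c. ncgen (Pt i) - ncconst (u c)) [1..<Suc r])}
   \<union> {\<rho>. \<exists>i\<in>{1..n}. \<exists>j\<in>{1..n}.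
          \<rho> = ncmul (ncgen (Pt i)) (ncgen (Pt j)) - ncmul (ncgen (Pt j)) (ncgen (Pt i))}
   \<union> {\<rho>. \<exists>j\<in>{1..n-1}. \<exists>i\<in>{1..n}.
          \<rho> = ncmul (ncgen (Pg j)) (ncgen (Pt i)) - ncmul (ncgen (Pt (sw j i))) (ncgen (Pg j))}
   \<union> {\<rho>. \<exists>i\<in>{1..n-1}. \<exists>j\<in>{1..n-1}. (i + 2 \<le> j \<or> j + 2 \<le> i) \<and>
          \<rho> = ncmul (ncgen (Pg i)) (ncgen (Pg j)) - ncmul (ncgen (Pg j)) (ncgen (Pg i))}
   \<union> {\<rho>. \<exists>i\<in>{1..n-2}. \<rho> = ncprod [ncgen (Pg i), ncgen (Pg (Suc i)), ncgen (Pg i)]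
                              - ncprod [ncgen (Pg (Suc i)), ncgen (Pg i), ncgen (Pg (Suc i))]}
   \<union> {\<rho>. \<exists>i\<in>{1..n-1}. \<rho> = ncmul (ncgen (Pg i)) (ncgen (Pg i)) - ncconst 1
          - ncmul (ncconst (q - ring_inv q)) (ncmul (eel u r n (\<lambda>i. ncgen (Pt i)) i) (ncgen (Pg i)))}"

definition psi_gen :: "(nat \<Rightarrow> 'a::comm_ring_1) \<Rightarrow> nat \<Rightarrow> nat \<Rightarrow> 'a \<Rightarrow> pgen \<Rightarrow> (hgen, 'a) nc" where
  "psi_gen u r n q g = (case g of
       Pt i \<Rightarrow> ncgen (Ht i)
     | Pg i \<Rightarrow> ncgen (HT i) + Bprime u r n q (\<lambda>i. ncgen (Ht i)) i (Suc i))"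

end

theory Submission
  imports Defs
begin

instantiation list :: (type) monoid_add begin
definition zero_list_def: "zero_list = []"
definition plus_list_def: "plus_list xs ys = xs @ ys"
instance by standard (auto simp: zero_list_def plus_list_def)
end

lemma single_mult_append:
  "Poly_Mapping.single v a * Poly_Mapping.single w b = Poly_Mapping.single (v @ w) (a * b :: 'a::semiring_0)"
  by (simp add: mult_single plus_list_def)

lemma nc_expand: "p = (\<Sum>v\<in>Poly_Mapping.keys p. Poly_Mapping.single v (Poly_Mapping.lookup p v))"
proof (rule poly_mapping_eqI)
  fix x
  have "Poly_Mapping.lookup (\<Sum>v\<in>Poly_Mapping.keys p. Poly_Mapping.single v (Poly_Mapping.lookup p v)) x
     = (\<Sum>v\<in>Poly_Mapping.keys p. if v = x then Poly_Mapping.lookup p v else 0)"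
    by (simp add: lookup_sum lookup_single when_def)
  also have "\<dots> = Poly_Mapping.lookup p x"
    by (simp add: in_keys_iff)
  finally show "Poly_Mapping.lookup p x = Poly_Mapping.lookup (\<Sum>v\<in>Poly_Mapping.keys p. Poly_Mapping.single v (Poly_Mapping.lookup p v)) x" by simp
qed

lemma ncmul_eq [simp]: "ncmul p q = p * (q :: ('g,'a::comm_ring_1) nc)"
proof -
  have "ncmul p q = (\<Sum>v\<in>Poly_Mapping.keys p. \<Sum>w\<in>Poly_Mapping.keys q.
      Poly_Mapping.single v (Poly_Mapping.lookup p v) * Poly_Mapping.single w (Poly_Mapping.lookup q w))"
    by (simp add: ncmul_def single_mult_append)
  also have "\<dots> = (\<Sum>v\<in>Poly_Mapping.keys p. Poly_Mapping.single v (Poly_Mapping.lookup p v)) *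
      (\<Sum>w\<in>Poly_Mapping.keys q. Poly_Mapping.single w (Poly_Mapping.lookup q w))"
    by (simp add: sum_product)
  also have "\<dots> = p * q" by (simp flip: nc_expand)
  finally show ?thesis .
qed

lemma ncconst_single: "ncconst c = Poly_Mapping.single 0 c"
  by (simp add: ncconst_def zero_list_def)

lemma ncconst_1 [simp]: "ncconst 1 = 1" by (simp add: ncconst_single)
lemma ncconst_0 [simp]: "ncconst 0 = 0" by (simp add: ncconst_single)
lemma ncconst_mult: "ncconst (a * b) = ncconst a * ncconst b"
  by (simp add: ncconst_single mult_single)
lemma ncconst_add: "ncconst (a + b) = ncconst a + ncconst b"
  by (simp add: ncconst_single single_add)
lemma ncconst_diff: "ncconst (a - b) = ncconst a - ncconst b"
  by (simp add: ncconst_single single_diff)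
lemma ncconst_uminus: "ncconst (- a) = - ncconst a"
  by (simp add: ncconst_single single_uminus)
lemma ncconst_power: "ncconst (a ^ k) = ncconst a ^ k"
  by (induct k) (simp_all add: ncconst_mult)
lemma ncconst_sum: "ncconst (sum f A) = (\<Sum>x\<in>A. ncconst (f x))"
  by (induct A rule: infinite_finite_induct) (simp_all add: ncconst_add)

lemma ncconst_central: "ncconst c * p = p * (ncconst c :: ('g,'a::comm_ring_1) nc)"
proof -
  have "ncconst c * p = (\<Sum>v\<in>Poly_Mapping.keys p. ncconst c * Poly_Mapping.single v (Poly_Mapping.lookup p v))"
    by (subst nc_expand) (simp add: sum_distrib_left)
  also have "\<dots> = (\<Sum>v\<in>Poly_Mapping.keys p. Poly_Mapping.single v (Poly_Mapping.lookup p v) * ncconst c)"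
    by (simp add: ncconst_def single_mult_append mult.commute)
  also have "\<dots> = p * ncconst c"
    by (subst (3) nc_expand) (simp add: sum_distrib_right)
  finally show ?thesis .
qed

lemma ncword_append: "ncword (v @ w) = ncword v * (ncword w :: ('g,'a::comm_ring_1) nc)"
  by (simp add: ncword_def single_mult_append)

lemma ncword_Nil [simp]: "ncword [] = (1 :: ('g,'a::comm_ring_1) nc)"
  by (simp add: ncword_def flip: zero_list_def)

lemma ncword_Cons: "ncword (g # w) = ncgen g * (ncword w :: ('g,'a::comm_ring_1) nc)"
  by (simp add: ncgen_def flip: ncword_append)

lemma ncword_prod: "ncword w = prod_list (map ncgen w :: ('g,'a::comm_ring_1) nc list)"
  by (induct w) (simp_all add: ncword_Cons)

lemma ncprod_eq [simp]: "ncprod xs = prod_list xs"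
  by (induct xs) (simp_all add: ncprod_def)

lemma ncpow_eq [simp]: "ncpow x k = x ^ k"
  by (simp add: ncpow_def prod_list_replicate)

lemma single_as_const_word: "Poly_Mapping.single w a = ncconst a * (ncword w :: ('g,'a::comm_ring_1) nc)"
  by (simp add: ncconst_def ncword_def single_mult_append)

lemma nc_subst_add: "nc_subst f (p + q) = nc_subst f p + nc_subst f q"
  unfolding nc_subst_def
  by (rule setsum_keys_plus_distrib) (simp_all add: ncconst_add distrib_right)

lemma nc_subst_0 [simp]: "nc_subst f 0 = 0"
  by (simp add: nc_subst_def)

lemma nc_subst_single: "nc_subst f (Poly_Mapping.single w a) = ncconst a * prod_list (map f w)"
  by (cases "a = 0") (simp_all add: nc_subst_def)

lemma nc_subst_sum: "nc_subst f (sum g A) = (\<Sum>x\<in>A. nc_subst f (g x))"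
  by (induct A rule: infinite_finite_induct) (simp_all add: nc_subst_add)

lemma nc_subst_uminus: "nc_subst f (- p) = - nc_subst f p"
proof -
  have "nc_subst f p + nc_subst f (- p) = 0" by (simp flip: nc_subst_add)
  then show ?thesis by (metis minus_unique)
qed

lemma nc_subst_diff: "nc_subst f (p - q) = nc_subst f p - nc_subst f q"
  using nc_subst_add[of f p "- q"] by (simp add: nc_subst_uminus)

lemma nc_subst_mult: "nc_subst f (p * q) = nc_subst f p * nc_subst f q"
proof -
  have "nc_subst f (p * q) = nc_subst f ((\<Sum>v\<in>Poly_Mapping.keys p. Poly_Mapping.single v (Poly_Mapping.lookup p v)) *
      (\<Sum>w\<in>Poly_Mapping.keys q. Poly_Mapping.single w (Poly_Mapping.lookup q w)))"
    by (simp flip: nc_expand)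
  also have "\<dots> = (\<Sum>v\<in>Poly_Mapping.keys p. \<Sum>w\<in>Poly_Mapping.keys q.
     nc_subst f (Poly_Mapping.single v (Poly_Mapping.lookup p v)) * nc_subst f (Poly_Mapping.single w (Poly_Mapping.lookup q w)))"
    apply (simp add: sum_product nc_subst_sum single_mult_append nc_subst_single ncconst_mult)
    apply (intro sum.cong refl)
    apply (simp add: mult.assoc)
    apply (metis mult.assoc ncconst_central)
    done
  also have "\<dots> = (\<Sum>v\<in>Poly_Mapping.keys p. nc_subst f (Poly_Mapping.single v (Poly_Mapping.lookup p v))) *
     (\<Sum>w\<in>Poly_Mapping.keys q. nc_subst f (Poly_Mapping.single w (Poly_Mapping.lookup q w)))"
    by (simp add: sum_product)
  also have "\<dots> = nc_subst f p * nc_subst f q"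
    by (simp add: nc_subst_sum[symmetric] flip: nc_expand)
  finally show ?thesis .
qed

lemma nc_subst_ncconst [simp]: "nc_subst f (ncconst c) = ncconst c"
  by (simp add: ncconst_def nc_subst_single)

lemma nc_subst_1 [simp]: "nc_subst f 1 = 1"
  using nc_subst_ncconst[of f 1] by simp

lemma nc_subst_ncgen [simp]: "nc_subst f (ncgen g) = f g"
  by (simp add: ncgen_def ncword_def nc_subst_single)

lemma nc_subst_ncword: "nc_subst f (ncword w) = prod_list (map f w)"
  by (simp add: ncword_def nc_subst_single)

lemma nc_subst_prod_list: "nc_subst f (prod_list xs) = prod_list (map (nc_subst f) xs)"
  by (induct xs) (simp_all add: nc_subst_mult)

lemma nc_subst_power: "nc_subst f (x ^ k) = nc_subst f x ^ k"
  by (induct k) (simp_all add: nc_subst_mult)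

lemmas nc_subst_simps = nc_subst_add nc_subst_sum nc_subst_uminus nc_subst_diff nc_subst_mult
  nc_subst_prod_list nc_subst_power nc_subst_ncword

lemma nc_subst_comp: "nc_subst f (nc_subst g p) = nc_subst (\<lambda>x. nc_subst f (g x)) p"
proof -
  have "nc_subst f (nc_subst g p) = nc_subst f (\<Sum>w\<in>Poly_Mapping.keys p. ncconst (Poly_Mapping.lookup p w) * prod_list (map g w))"
    by (simp only: nc_subst_def[of g p] ncmul_eq ncprod_eq)
  also have "\<dots> = (\<Sum>w\<in>Poly_Mapping.keys p. ncconst (Poly_Mapping.lookup p w) * prod_list (map (\<lambda>x. nc_subst f (g x)) w))"
    by (simp only: nc_subst_sum nc_subst_mult nc_subst_prod_list nc_subst_ncconst map_map o_def)
  also have "\<dots> = nc_subst (\<lambda>x. nc_subst f (g x)) p"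
    by (simp only: nc_subst_def ncmul_eq ncprod_eq)
  finally show ?thesis .
qed

lemma nc_subst_id: "nc_subst ncgen p = p"
proof -
  have "nc_subst ncgen p = (\<Sum>v\<in>Poly_Mapping.keys p. Poly_Mapping.single v (Poly_Mapping.lookup p v))"
    by (simp add: nc_subst_def single_as_const_word ncword_prod)
  then show ?thesis by (simp flip: nc_expand)
qed

lemma nc_subst_cong: "(\<And>g. f g = f' g) \<Longrightarrow> nc_subst f p = nc_subst f' p"
  by (metis ext)

abbreviation "JU Rel \<equiv> nc_ideal UNIV Rel"

lemma const_lcomm: "x * (ncconst c * y) = ncconst c * (x * (y :: ('g,'a::comm_ring_1) nc))"
  by (metis mult.assoc ncconst_central)

lemma nc_ideal_gen': "set v \<subseteq> S \<Longrightarrow> set w \<subseteq> S \<Longrightarrow> \<rho> \<in> Rel \<Longrightarrow>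
          ncconst c * (ncword v * (\<rho> * ncword w)) \<in> nc_ideal S Rel"
  using nc_ideal.gen[of v S w \<rho> Rel c] by simp

lemma nc_ideal_UNIV: "x \<in> nc_ideal S Rel \<Longrightarrow> x \<in> JU Rel"
proof (induct rule: nc_ideal.induct)
  case zero then show ?case by (rule nc_ideal.zero)
next
  case (add x y) then show ?case by (blast intro: nc_ideal.add)
next
  case (gen v w \<rho> c) then show ?case by (simp add: nc_ideal_gen')
qed

lemma JU_word_left: "x \<in> JU Rel \<Longrightarrow> ncword v * x \<in> JU Rel"
proof (induct rule: nc_ideal.induct)
  case zero then show ?case by (simp add: nc_ideal.zero)
next
  case (add x y) then show ?case by (simp add: distrib_left nc_ideal.add)
next
  case (gen v' w \<rho> c)
  have "ncword v * (ncmul (ncconst c) (ncmul (ncword v') (ncmul \<rho> (ncword w))))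
     = ncmul (ncconst c) (ncmul (ncword (v @ v')) (ncmul \<rho> (ncword w)))"
    by (simp only: ncmul_eq const_lcomm ncword_append mult.assoc)
  then show ?case using gen by (simp add: nc_ideal_gen')
qed

lemma JU_word_right: "x \<in> JU Rel \<Longrightarrow> x * ncword v \<in> JU Rel"
proof (induct rule: nc_ideal.induct)
  case zero then show ?case by (simp add: nc_ideal.zero)
next
  case (add x y) then show ?case by (simp add: distrib_right nc_ideal.add)
next
  case (gen v' w \<rho> c)
  have "(ncmul (ncconst c) (ncmul (ncword v') (ncmul \<rho> (ncword w)))) * ncword v
     = ncmul (ncconst c) (ncmul (ncword v') (ncmul \<rho> (ncword (w @ v))))"
    by (simp add: ncword_append mult.assoc)
  then show ?case using gen by (simp add: nc_ideal_gen')
qed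

lemma JU_const: "x \<in> JU Rel \<Longrightarrow> ncconst c * x \<in> JU Rel"
proof (induct rule: nc_ideal.induct)
  case zero then show ?case by (simp add: nc_ideal.zero)
next
  case (add x y) then show ?case by (simp add: distrib_left nc_ideal.add)
next
  case (gen v' w \<rho> c')
  have "ncconst c * (ncmul (ncconst c') (ncmul (ncword v') (ncmul \<rho> (ncword w))))
     = ncmul (ncconst (c * c')) (ncmul (ncword v') (ncmul \<rho> (ncword w)))"
    by (simp add: ncconst_mult mult.assoc)
  then show ?case using gen by (simp add: nc_ideal_gen')
qed

lemma JU_sum: "(\<And>i. i \<in> A \<Longrightarrow> f i \<in> JU Rel) \<Longrightarrow> sum f A \<in> JU Rel"
  by (induct A rule: infinite_finite_induct) (auto intro: nc_ideal.zero nc_ideal.add)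

lemma nc_expand2: "(\<Sum>v\<in>Poly_Mapping.keys p. ncconst (Poly_Mapping.lookup p v) * ncword v) = p"
proof -
  have "(\<Sum>v\<in>Poly_Mapping.keys p. ncconst (Poly_Mapping.lookup p v) * ncword v)
    = (\<Sum>v\<in>Poly_Mapping.keys p. Poly_Mapping.single v (Poly_Mapping.lookup p v))"
    by (simp add: single_as_const_word)
  also have "\<dots> = p" by (rule nc_expand[symmetric])
  finally show ?thesis .
qed

lemma JU_left: assumes "x \<in> JU Rel" shows "p * x \<in> JU Rel"
proof -
  have "p * x = (\<Sum>v\<in>Poly_Mapping.keys p. ncconst (Poly_Mapping.lookup p v) * ncword v) * x"
    by (simp only: nc_expand2)
  also have "\<dots> = (\<Sum>v\<in>Poly_Mapping.keys p. ncconst (Poly_Mapping.lookup p v) * (ncword v * x))"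
    by (simp only: sum_distrib_right mult.assoc)
  also have "\<dots> \<in> JU Rel" using assms by (intro JU_sum JU_const JU_word_left)
  finally show ?thesis .
qed

lemma JU_right: assumes "x \<in> JU Rel" shows "x * p \<in> JU Rel"
proof -
  have "x * p = x * (\<Sum>v\<in>Poly_Mapping.keys p. ncconst (Poly_Mapping.lookup p v) * ncword v)"
    by (simp only: nc_expand2)
  also have "\<dots> = (\<Sum>v\<in>Poly_Mapping.keys p. ncconst (Poly_Mapping.lookup p v) * (x * ncword v))"
    by (simp only: sum_distrib_left const_lcomm)
  also have "\<dots> \<in> JU Rel" using assms by (intro JU_sum JU_const JU_word_right)
  finally show ?thesis .
qed

lemma JU_rel: "\<rho> \<in> Rel \<Longrightarrow> \<rho> \<in> nc_ideal S Rel"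
  using nc_ideal.gen[of "[]" S "[]" \<rho> Rel 1] by simp

lemma JU_add: "x \<in> JU Rel \<Longrightarrow> y \<in> JU Rel \<Longrightarrow> x + y \<in> JU Rel"
  by (rule nc_ideal.add)

lemma JU_uminus: "x \<in> JU Rel \<Longrightarrow> - x \<in> JU Rel"
  using JU_const[of x Rel "-1"] by (simp add: ncconst_uminus)

lemma JU_diff: "x \<in> JU Rel \<Longrightarrow> y \<in> JU Rel \<Longrightarrow> x - y \<in> JU Rel"
  unfolding diff_conv_add_uminus by (blast intro: JU_add JU_uminus)

lemma fa_on_add: "(x::('g,'a::comm_ring_1) nc) \<in> fa_on S \<Longrightarrow> y \<in> fa_on S \<Longrightarrow> x + y \<in> fa_on S"
  unfolding fa_on_def using keys_add[of x y] by blast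

lemma fa_on_uminus: "(x::('g,'a::comm_ring_1) nc) \<in> fa_on S \<Longrightarrow> - x \<in> fa_on S"
  unfolding fa_on_def by simp 

lemma fa_on_diff: "(x::('g,'a::comm_ring_1) nc) \<in> fa_on S \<Longrightarrow> y \<in> fa_on S \<Longrightarrow> x - y \<in> fa_on S"
  unfolding diff_conv_add_uminus by (blast intro: fa_on_add fa_on_uminus)

lemma fa_on_mult: "x \<in> fa_on S \<Longrightarrow> y \<in> fa_on S \<Longrightarrow> x * y \<in> fa_on S"
  unfolding fa_on_def using keys_mult[of x y] by (fastforce simp: plus_list_def)

lemma fa_on_const: "ncconst c \<in> fa_on S"
  unfolding fa_on_def ncconst_def by (simp)

lemma fa_on_0: "0 \<in> fa_on S" unfolding fa_on_def by simp
lemma fa_on_1: "(1::('g,'a::comm_ring_1) nc) \<in> fa_on S" by (metis fa_on_const ncconst_1)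

lemma fa_on_gen: "g \<in> S \<Longrightarrow> ncgen g \<in> fa_on S"
  unfolding fa_on_def ncgen_def ncword_def by simp

lemma fa_on_sum: "(\<And>i. i \<in> A \<Longrightarrow> (f i :: ('g,'a::comm_ring_1) nc) \<in> fa_on S) \<Longrightarrow> sum f A \<in> fa_on S"
  by (induct A rule: infinite_finite_induct) (auto intro: fa_on_add fa_on_0)

lemma fa_on_prod_list: "(\<And>x. x \<in> set xs \<Longrightarrow> x \<in> fa_on S) \<Longrightarrow> prod_list xs \<in> (fa_on S :: ('g,'a::comm_ring_1) nc set)"
  by (induct xs) (auto intro: fa_on_mult fa_on_1)

lemma fa_on_subst:
  assumes "x \<in> fa_on S" "\<And>g. g \<in> S \<Longrightarrow> f g \<in> fa_on T"
  shows "nc_subst f x \<in> fa_on T"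
  unfolding nc_subst_def ncmul_eq ncprod_eq
proof (intro fa_on_sum fa_on_mult fa_on_const fa_on_prod_list)
  fix w y assume "w \<in> Poly_Mapping.keys x" "y \<in> set (map f w)"
  then obtain g where "g \<in> set w" "y = f g" by auto
  moreover have "set w \<subseteq> S" using assms(1) \<open>w \<in> _\<close> by (auto simp: fa_on_def)
  ultimately show "y \<in> fa_on T" using assms(2) by auto
qed

definition proj :: "'g set \<Rightarrow> ('g, 'a::comm_ring_1) nc \<Rightarrow> ('g, 'a) nc" where
  "proj S = nc_subst (\<lambda>g. if g \<in> S then ncgen g else 0)"

lemma proj_word_aux: "prod_list (map (\<lambda>g. if g \<in> S then ncgen g else 0) w) = (if set w \<subseteq> S then ncword w else (0::('g,'a::comm_ring_1) nc))"
  by (induct w) (auto simp: ncword_Cons)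

lemma proj_word: "proj S (ncword w) = (if set w \<subseteq> S then ncword w else 0)"
  by (simp only: proj_def nc_subst_ncword proj_word_aux)

lemma proj_fa: assumes "x \<in> fa_on S" shows "proj S x = x"
proof -
  have "proj S x = (\<Sum>w\<in>Poly_Mapping.keys x. ncconst (Poly_Mapping.lookup x w) * ncword w)"
    unfolding proj_def nc_subst_def ncmul_eq ncprod_eq using assms
    by (intro sum.cong refl) (auto simp: fa_on_def proj_word_aux)
  also have "\<dots> = x" by (simp flip: single_as_const_word nc_expand)
  finally show ?thesis .
qed

lemma proj_ideal:
  assumes "x \<in> JU Rel" "Rel \<subseteq> fa_on S"
  shows "proj S x \<in> nc_ideal S Rel"
  using assms(1)
proof (induct rule: nc_ideal.induct)
  case zero then show ?case by (simp add: proj_def nc_ideal.zero)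
next
  case (add x y) then show ?case by (simp add: proj_def nc_subst_add nc_ideal.add)
next
  case (gen v w \<rho> c)
  have r: "proj S \<rho> = \<rho>" using gen assms(2) proj_fa by blast
  show ?case
  proof (cases "set v \<subseteq> S \<and> set w \<subseteq> S")
    case True
    then have "proj S (ncmul (ncconst c) (ncmul (ncword v) (ncmul \<rho> (ncword w))))
       = ncmul (ncconst c) (ncmul (ncword v) (ncmul \<rho> (ncword w)))"
      using r True unfolding ncmul_eq
      by (simp only: proj_def nc_subst_mult nc_subst_ncconst) (simp only: flip: proj_def; simp add: proj_word)
    then show ?thesis using True gen by (simp add: nc_ideal.gen del: ncmul_eq)
  next
    case False
    then have "proj S (ncmul (ncconst c) (ncmul (ncword v) (ncmul \<rho> (ncword w)))) = 0"
      unfolding ncmul_eq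
      by (simp only: proj_def nc_subst_mult nc_subst_ncconst) (simp only: flip: proj_def; auto simp add: proj_word)
    then show ?thesis by (simp add: nc_ideal.zero)
  qed
qed

lemma JU_to_ideal: "x \<in> JU Rel \<Longrightarrow> Rel \<subseteq> fa_on S \<Longrightarrow> x \<in> fa_on S \<Longrightarrow> x \<in> nc_ideal S Rel"
  using proj_ideal proj_fa by metis

lemma subst_JU:
  assumes "x \<in> JU Rel" "\<And>\<rho>. \<rho> \<in> Rel \<Longrightarrow> nc_subst f \<rho> \<in> JU Rel'"
  shows "nc_subst f x \<in> JU Rel'"
  using assms(1)
proof (induct rule: nc_ideal.induct)
  case zero then show ?case by (simp add: nc_ideal.zero)
next
  case (add x y) then show ?case by (simp add: nc_subst_add nc_ideal.add)
next
  case (gen v w \<rho> c)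
  show ?case using assms(2)[OF gen(3)]
    by (simp add: nc_subst_mult JU_left JU_right)
qed

lemma ring_inv_eq: assumes "(x::'a::comm_ring_1) dvd 1" shows "x * ring_inv x = 1"
proof -
  obtain k where k: "1 = x * k" using assms by (auto elim: dvdE)
  have "\<exists>!y. x * y = 1"
  proof
    show "x * k = 1" using k by simp
    fix y assume "x * y = 1"
    then have "k = y * (x * k)" by (simp add: mult.commute mult.left_commute)
    then show "y = k" using k by simp
  qed
  then show ?thesis unfolding ring_inv_def by (rule theI')
qed

lemma ring_inv_eq': "(x::'a::comm_ring_1) dvd 1 \<Longrightarrow> ring_inv x * x = 1"
  using ring_inv_eq by (metis mult.commute)

definition lin :: "'a::comm_ring_1 \<Rightarrow> 'a poly" where "lin a = [:-a, 1:]"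

definition mpoly :: "(nat \<Rightarrow> 'a::comm_ring_1) \<Rightarrow> nat \<Rightarrow> 'a poly" where
  "mpoly u r = prod_list (map (\<lambda>j. lin (u j)) [1..<Suc r])"

definition lag :: "(nat \<Rightarrow> 'a::comm_ring_1) \<Rightarrow> nat \<Rightarrow> nat \<Rightarrow> 'a poly" where
  "lag u r c = prod_list (map (\<lambda>j. smult (ring_inv (u c - u j)) (lin (u j))) (filter (\<lambda>j. j \<noteq> c) [1..<Suc r]))"

lemma poly_prod_list_map: "poly (prod_list (map F xs)) y = prod_list (map (\<lambda>j. poly (F j) y) xs)"
  by (induct xs) simp_all

lemma prod_list_map_1 [simp]: "prod_list (map (\<lambda>_. 1) xs) = (1::'a::monoid_mult)"
  by (induct xs) simp_all

lemma poly_lin [simp]: "poly (lin a) x = x - a" by (simp add: lin_def)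
lemma degree_lin [simp]: "degree (lin a) = 1" by (simp add: lin_def)
lemma lin_nz [simp]: "lin (a::'a::comm_ring_1) \<noteq> 0" by (simp add: lin_def)

lemma vanish_dvd:
  fixes p :: "'a::idom poly"
  assumes "distinct (map u js)" "\<And>j. j \<in> set js \<Longrightarrow> poly p (u j) = 0"
  shows "prod_list (map (\<lambda>j. lin (u j)) js) dvd p"
  using assms
proof (induct js arbitrary: p)
  case Nil then show ?case by simp
next
  case (Cons a js)
  have "lin (u a) dvd p" using Cons.prems(2)[of a] by (simp add: lin_def poly_eq_0_iff_dvd)
  then obtain p' where p': "p = lin (u a) * p'" by (elim dvdE)
  have "poly p' (u j) = 0" if "j \<in> set js" for j
  proof -
    have "u a \<notin> u ` set js" using Cons.prems(1) by simp
    then have "u j \<noteq> u a" using that by (metis image_eqI)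
    moreover have "poly p (u j) = 0" using Cons.prems(2) that by simp
    ultimately show ?thesis using p' by simp
  qed
  then have "prod_list (map (\<lambda>j. lin (u j)) js) dvd p'" using Cons by simp
  then show ?case using p' by simp
qed

lemma degree_prod_lin:
  "degree (prod_list (map (\<lambda>j. lin (u j :: 'a::idom)) js)) = length js \<and> prod_list (map (\<lambda>j. lin (u j)) js) \<noteq> 0"
  by (induct js) (simp_all add: degree_mult_eq)

locale lagr =
  fixes u :: "nat \<Rightarrow> 'a::idom" and r :: nat
  assumes r1: "r \<ge> 1" and Dunit: "Delta u r dvd 1"
begin

lemma diff_unit: assumes "c \<in> {1..r}" "d \<in> {1..r}" "c \<noteq> d" shows "(u c - u d) dvd 1"
proof -
  have *: "(u i - u j) dvd 1" if "j \<in> {1..r}" "i \<in> {j<..r}" for i j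
  proof -
    have "(u i - u j) dvd (\<Prod>i\<in>{j<..r}. (u i - u j))" using that by (intro dvd_prodI) auto
    also have "\<dots> dvd Delta u r" unfolding Delta_def using that by (intro dvd_prodI) auto
    finally show ?thesis using Dunit by (rule dvd_trans)
  qed
  show ?thesis
  proof (cases "d < c")
    case True then show ?thesis using * assms by auto
  next
    case False
    then have "(u d - u c) dvd 1" using * assms by auto
    moreover have "u c - u d = - (u d - u c)" by simp
    ultimately show ?thesis by (metis minus_dvd_iff)
  qed
qed

lemma u_inj: "c \<in> {1..r} \<Longrightarrow> d \<in> {1..r} \<Longrightarrow> c \<noteq> d \<Longrightarrow> u c \<noteq> u d"
  using diff_unit by fastforce

lemma distinct_u: "set js \<subseteq> {1..r} \<Longrightarrow> distinct js \<Longrightarrow> distinct (map u js)"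
proof (induct js)
  case Nil then show ?case by simp
next
  case (Cons a js)
  have "u a \<notin> u ` set js"
  proof
    assume "u a \<in> u ` set js"
    then obtain x where "x \<in> set js" "u a = u x" by auto
    moreover have "x \<noteq> a" using Cons.prems \<open>x \<in> set js\<close> by auto
    ultimately show False using u_inj[of a x] Cons.prems by auto
  qed
  then show ?case using Cons by simp
qed

lemma vanish_all:
  fixes p :: "'a poly"
  assumes "\<And>j. j \<in> {1..r} \<Longrightarrow> poly p (u j) = 0"
  shows "mpoly u r dvd p"
  unfolding mpoly_def using assms by (intro vanish_dvd distinct_u) auto

lemma degree_mpoly: "degree (mpoly u r) = r" and mpoly_nz: "mpoly u r \<noteq> 0"
  using degree_prod_lin[of u "[1..<Suc r]"] by (simp_all add: mpoly_def)

lemma vanish_zero: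
  fixes p :: "'a poly"
  assumes "degree p < r" "\<And>j. j \<in> {1..r} \<Longrightarrow> poly p (u j) = 0"
  shows "p = 0"
proof (rule ccontr)
  assume "p \<noteq> 0"
  with vanish_all[OF assms(2)] have "degree (mpoly u r) \<le> degree p" by (rule dvd_imp_degree_le)
  then show False using assms(1) degree_mpoly by simp
qed

lemma poly_lag: assumes "c \<in> {1..r}" "d \<in> {1..r}"
  shows "poly (lag u r c) (u d) = (if c = d then 1 else 0)"
proof (cases "c = d")
  case True
  have "poly (lag u r c) (u d) = prod_list (map (\<lambda>j. ring_inv (u c - u j) * (u c - u j)) (filter (\<lambda>j. j \<noteq> c) [1..<Suc r]))"
    using True by (simp add: lag_def poly_prod_list_map o_def del: upt_Suc)
  also have "\<dots> = prod_list (map (\<lambda>j. 1) (filter (\<lambda>j. j \<noteq> c) [1..<Suc r]))"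
    using assms by (intro arg_cong[where f=prod_list] map_cong refl ring_inv_eq' diff_unit) (auto simp del: upt_Suc)
  finally show ?thesis using True by (simp del: upt_Suc)
next
  case False
  then have "d \<in> set (filter (\<lambda>j. j \<noteq> c) [1..<Suc r])" using assms by auto
  then show ?thesis using False
    by (simp add: lag_def poly_prod_list_map o_def prod_list_zero_iff del: upt_Suc)
       (metis (mono_tags, lifting) diff_self image_eqI mem_Collect_eq mult_zero_right)
qed

lemma degree_lag: "degree (lag u r c) \<le> r - 1" if "c \<in> {1..r}"
proof -
  have "degree (lag u r c) \<le> sum_list (map degree (map (\<lambda>j. smult (ring_inv (u c - u j)) (lin (u j))) (filter (\<lambda>j. j \<noteq> c) [1..<Suc r])))"
    unfolding lag_def by (rule degree_prod_list_le)
  also have "\<dots> \<le> sum_list (map (\<lambda>j. 1) (filter (\<lambda>j. j \<noteq> c) [1..<Suc r]))"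
    unfolding map_map o_def by (intro sum_list_mono) (metis degree_lin degree_smult_le)
  also have "\<dots> = length (filter (\<lambda>j. j \<noteq> c) [1..<Suc r])" by (simp add: sum_list_triv)
  also have "\<dots> = r - 1"
  proof -
    have "length (filter (\<lambda>j. j \<noteq> c) [1..<Suc r]) = card (set (filter (\<lambda>j. j \<noteq> c) [1..<Suc r]))"
      by (rule distinct_card[symmetric]) simp
    also have "set (filter (\<lambda>j. j \<noteq> c) [1..<Suc r]) = {1..r} - {c}" by auto
    also have "card \<dots> = r - 1" using that by simp
    finally show ?thesis .
  qed
  finally show ?thesis .
qed

lemma sum_lag: "(\<Sum>c\<in>{1..r}. lag u r c) = 1"
proof -
  have "(\<Sum>c\<in>{1..r}. lag u r c) - 1 = 0"
  proof (rule vanish_zero)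
    show "degree ((\<Sum>c\<in>{1..r}. lag u r c) - 1) < r"
    proof (rule degree_diff_less)
      have "degree (\<Sum>c\<in>{1..r}. lag u r c) \<le> r - 1" by (intro degree_sum_le degree_lag) auto
      then show "degree (\<Sum>c\<in>{1..r}. lag u r c) < r" using r1 by linarith
      show "degree (1::'a poly) < r" using r1 by simp
    qed
    fix j assume j: "j \<in> {1..r}"
    have "(\<Sum>c\<in>{1..r}. poly (lag u r c) (u j)) = (\<Sum>c\<in>{1..r}. if c = j then 1 else 0)"
      using j by (intro sum.cong refl) (simp add: poly_lag)
    then show "poly ((\<Sum>c\<in>{1..r}. lag u r c) - 1) (u j) = 0" using j by (simp add: poly_sum)
  qed
  then show ?thesis by simp
qed

lemma interp_dvd: "mpoly u r dvd (p - (\<Sum>c\<in>{1..r}. smult (poly p (u c)) (lag u r c)))"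
proof (rule vanish_all)
  fix j assume j: "j \<in> {1..r}"
  have "(\<Sum>c\<in>{1..r}. poly p (u c) * poly (lag u r c) (u j)) = (\<Sum>c\<in>{1..r}. if c = j then poly p (u j) else 0)"
    using j by (intro sum.cong refl) (simp add: poly_lag)
  then show "poly (p - (\<Sum>c\<in>{1..r}. smult (poly p (u c)) (lag u r c))) (u j) = 0"
    using j by (simp add: poly_sum)
qed

lemma lag_mult_dvd: assumes "c \<in> {1..r}" "d \<in> {1..r}"
  shows "mpoly u r dvd (lag u r c * lag u r d - (if c = d then lag u r c else 0))"
proof (rule vanish_all)
  fix j assume j: "j \<in> {1..r}"
  show "poly (lag u r c * lag u r d - (if c = d then lag u r c else 0)) (u j) = 0"
    using assms j by (auto simp: poly_lag)
qed

lemma Fpoly_eq: assumes "c \<in> {1..r}" shows "Fpoly u r c = smult (Delta u r) (lag u r c)"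
  unfolding Fpoly_def
proof (rule the1_equality)
  let ?P = "\<lambda>p. degree p \<le> r - 1 \<and> (\<forall>c'\<in>{1..r}. poly p (u c') = (if c = c' then Delta u r else 0))"
  show "?P (smult (Delta u r) (lag u r c))"
    using assms degree_lag[OF assms] by (auto simp: poly_lag intro: order.trans[OF degree_smult_le])
  show "\<exists>!p. ?P p"
  proof (rule ex1I[of _ "smult (Delta u r) (lag u r c)"])
    show "?P (smult (Delta u r) (lag u r c))"
      using assms degree_lag[OF assms] by (auto simp: poly_lag intro: order.trans[OF degree_smult_le])
    fix p assume p: "?P p"
    have "p - smult (Delta u r) (lag u r c) = 0"
    proof (rule vanish_zero)
      show "degree (p - smult (Delta u r) (lag u r c)) < r"
      proof (rule degree_diff_less)
        show "degree p < r" using p r1 by linarith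
        show "degree (smult (Delta u r) (lag u r c)) < r"
          using degree_smult_le[of "Delta u r" "lag u r c"] degree_lag[OF assms] r1 by linarith
      qed
      show "poly (p - smult (Delta u r) (lag u r c)) (u j) = 0" if "j \<in> {1..r}" for j
        using p that assms by (auto simp: poly_lag)
    qed
    then show "p = smult (Delta u r) (lag u r c)" by simp
  qed
qed

end

lemma ncpoly_N: assumes "degree p \<le> N" shows "ncpoly p x = (\<Sum>i\<le>N. ncconst (coeff p i) * x ^ i)"
  unfolding ncpoly_def ncmul_eq ncpow_eq
  by (rule sum.mono_neutral_left) (use assms in \<open>auto simp: coeff_eq_0\<close>)

lemma ncpoly_0 [simp]: "ncpoly 0 x = 0"
  by (simp add: ncpoly_def)

lemma ncpoly_pCons: "ncpoly (pCons a p) x = ncconst a + x * ncpoly p x"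
proof -
  have "ncpoly (pCons a p) x = (\<Sum>i\<le>Suc (degree p). ncconst (coeff (pCons a p) i) * x ^ i)"
    by (rule ncpoly_N) (simp add: degree_pCons_le)
  also have "\<dots> = ncconst a + (\<Sum>i\<le>degree p. ncconst (coeff p i) * x ^ Suc i)"
    unfolding sum.atMost_Suc_shift by simp
  also have "\<dots> = ncconst a + x * ncpoly p x"
    by (simp add: ncpoly_def sum_distrib_left const_lcomm)
  finally show ?thesis .
qed

lemma ncpoly_add: "ncpoly (p + q) x = ncpoly p x + ncpoly q x"
proof -
  let ?N = "max (degree p) (degree q)"
  have "ncpoly (p + q) x = (\<Sum>i\<le>?N. ncconst (coeff (p + q) i) * x ^ i)"
    by (rule ncpoly_N) (rule degree_add_le_max)
  also have "\<dots> = (\<Sum>i\<le>?N. ncconst (coeff p i) * x ^ i) + (\<Sum>i\<le>?N. ncconst (coeff q i) * x ^ i)"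
    by (simp add: ncconst_add distrib_right sum.distrib)
  also have "\<dots> = ncpoly p x + ncpoly q x"
    by (simp add: ncpoly_N[symmetric])
  finally show ?thesis .
qed

lemma ncpoly_smult: "ncpoly (smult a p) x = ncconst a * ncpoly p x"
proof -
  have "ncpoly (smult a p) x = (\<Sum>i\<le>degree p. ncconst (coeff (smult a p) i) * x ^ i)"
    by (rule ncpoly_N) (rule degree_smult_le)
  also have "\<dots> = ncconst a * ncpoly p x"
    by (simp add: ncpoly_def sum_distrib_left ncconst_mult mult.assoc)
  finally show ?thesis .
qed

lemma ncpoly_uminus: "ncpoly (- p) x = - ncpoly p x"
proof -
  have "ncpoly p x + ncpoly (- p) x = 0" by (simp flip: ncpoly_add)
  then show ?thesis by (metis minus_unique)
qed

lemma ncpoly_diff: "ncpoly (p - q) x = ncpoly p x - ncpoly q x"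
  using ncpoly_add[of p "- q" x] by (simp add: ncpoly_uminus)

lemma ncpoly_mult: "ncpoly (p * q) x = ncpoly p x * ncpoly q x"
proof (induct p rule: pCons_induct)
  case 0 then show ?case by simp
next
  case (pCons a p)
  have "ncpoly (pCons a p * q) x = ncconst a * ncpoly q x + x * ncpoly (p * q) x"
    by (simp add: ncpoly_add ncpoly_smult ncpoly_pCons)
  also have "\<dots> = (ncconst a + x * ncpoly p x) * ncpoly q x"
    using pCons(2) by (simp add: distrib_right mult.assoc)
  finally show ?case by (simp add: ncpoly_pCons)
qed

lemma ncpoly_const [simp]: "ncpoly [:a:] x = ncconst a"
  by (simp add: ncpoly_pCons)

lemma ncpoly_1 [simp]: "ncpoly 1 x = 1"
  using ncpoly_const[of 1 x] by (simp add: one_pCons)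

lemma ncpoly_X: "ncpoly [:0, 1:] x = x"
  by (simp add: ncpoly_pCons)

lemma ncpoly_lin: "ncpoly (lin a) x = x - ncconst a"
  by (simp add: lin_def ncpoly_pCons ncconst_uminus)

lemma ncpoly_prod_list_map: "ncpoly (prod_list (map F xs)) x = prod_list (map (\<lambda>j. ncpoly (F j) x) xs)"
  by (induct xs) (simp_all add: ncpoly_mult)

lemma ncpoly_sum: "ncpoly (sum F A) x = (\<Sum>a\<in>A. ncpoly (F a) x)"
  by (induct A rule: infinite_finite_induct) (simp_all add: ncpoly_add)

lemma nc_subst_ncpoly: "nc_subst f (ncpoly p x) = ncpoly p (nc_subst f x)"
  by (simp add: ncpoly_def nc_subst_sum nc_subst_mult nc_subst_power)

lemma prod_list_sum_PiE:
  fixes F :: "nat \<Rightarrow> nat \<Rightarrow> 'b::semiring_1"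
  assumes "distinct ys" "finite C"
  shows "prod_list (map (\<lambda>i. \<Sum>c\<in>C. F i c) ys) = (\<Sum>g\<in>PiE (set ys) (\<lambda>_. C). prod_list (map (\<lambda>i. F i (g i)) ys))"
  using assms
proof (induct ys)
  case Nil then show ?case by simp
next
  case (Cons y ys)
  have ny: "y \<notin> set ys" using Cons by simp
  have e: "PiE (set (y # ys)) (\<lambda>_. C) = (\<lambda>(c, g). g(y := c)) ` (C \<times> PiE (set ys) (\<lambda>_. C))"
    using PiE_insert_eq[of y "set ys" "\<lambda>_. C"] by simp
  have "(\<Sum>g\<in>PiE (set (y # ys)) (\<lambda>_. C). prod_list (map (\<lambda>i. F i (g i)) (y # ys)))
      = (\<Sum>x\<in>C \<times> PiE (set ys) (\<lambda>_. C). ((\<lambda>g. prod_list (map (\<lambda>i. F i (g i)) (y # ys))) \<circ> (\<lambda>(c, g). g(y := c))) x)"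
    unfolding e by (rule sum.reindex[OF inj_combinator[OF ny, of "\<lambda>_. C"]])
  also have "\<dots> = (\<Sum>(c, g)\<in>C \<times> PiE (set ys) (\<lambda>_. C). F y c * prod_list (map (\<lambda>i. F i (g i)) ys))"
  proof (intro sum.cong refl, clarify)
    fix c g
    show "((\<lambda>g. prod_list (map (\<lambda>i. F i (g i)) (y # ys))) \<circ> (\<lambda>(c, g). g(y := c))) (c, g) = F y c * prod_list (map (\<lambda>i. F i (g i)) ys)"
    proof -
    have m: "map (\<lambda>i. F i ((g(y := c)) i)) ys = map (\<lambda>i. F i (g i)) ys" using ny by (intro map_cong) auto
    show ?thesis by (simp only: comp_apply case_prod_conv list.map prod_list.Cons m fun_upd_same)
    qed
  qed
  also have "\<dots> = (\<Sum>c\<in>C. F y c) * (\<Sum>g\<in>PiE (set ys) (\<lambda>_. C). prod_list (map (\<lambda>i. F i (g i)) ys))"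
    by (simp add: sum.cartesian_product[symmetric] sum_product)
  also have "\<dots> = prod_list (map (\<lambda>i. \<Sum>c\<in>C. F i c) (y # ys))"
    using Cons by simp
  finally show ?case by simp
qed

locale ncrel = fixes Rel :: "('g, 'a::idom) nc set"
begin

definition eqv :: "('g, 'a) nc \<Rightarrow> ('g, 'a) nc \<Rightarrow> bool" (infix "\<approx>" 50)
  where "x \<approx> y \<longleftrightarrow> x - y \<in> JU Rel"

lemma eqv_refl [simp, intro]: "x \<approx> x"
  by (simp add: eqv_def nc_ideal.zero)

lemma eqv_eq: "x = y \<Longrightarrow> x \<approx> y" by simp

lemma eqv_sym: "x \<approx> y \<Longrightarrow> y \<approx> x"
  unfolding eqv_def using JU_uminus by fastforce

lemma eqv_trans [trans]: "x \<approx> y \<Longrightarrow> y \<approx> z \<Longrightarrow> x \<approx> z"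
  unfolding eqv_def using JU_add by fastforce

lemma eqv_trans_eq1 [trans]: "x = y \<Longrightarrow> y \<approx> z \<Longrightarrow> x \<approx> z" by simp
lemma eqv_trans_eq2 [trans]: "x \<approx> y \<Longrightarrow> y = z \<Longrightarrow> x \<approx> z" by simp

lemma eqv_add: "x \<approx> x' \<Longrightarrow> y \<approx> y' \<Longrightarrow> x + y \<approx> x' + y'"
  unfolding eqv_def using JU_add by (fastforce simp: algebra_simps)

lemma eqv_uminus: "x \<approx> x' \<Longrightarrow> - x \<approx> - x'"
  unfolding eqv_def using JU_uminus by (fastforce simp: algebra_simps)

lemma eqv_diff: "x \<approx> x' \<Longrightarrow> y \<approx> y' \<Longrightarrow> x - y \<approx> x' - y'"
  unfolding diff_conv_add_uminus by (intro eqv_add eqv_uminus)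

lemma eqv_mult: assumes "x \<approx> x'" "y \<approx> y'" shows "x * y \<approx> x' * y'"
proof -
  have "x * y - x' * y' = (x - x') * y + x' * (y - y')" by (simp add: algebra_simps)
  then show ?thesis using assms unfolding eqv_def by (simp add: JU_add JU_left JU_right)
qed

lemma eqv_multL: "y \<approx> y' \<Longrightarrow> x * y \<approx> x * y'" by (rule eqv_mult) auto
lemma eqv_multR: "x \<approx> x' \<Longrightarrow> x * y \<approx> x' * y" by (rule eqv_mult) auto

lemma eqv_sum: "(\<And>i. i \<in> A \<Longrightarrow> f i \<approx> g i) \<Longrightarrow> sum f A \<approx> sum g A"
  by (induct A rule: infinite_finite_induct) (auto intro: eqv_add)

lemma eqv_prod_list: "(\<And>i. i \<in> set xs \<Longrightarrow> f i \<approx> g i) \<Longrightarrow> prod_list (map f xs) \<approx> prod_list (map g xs)"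
  by (induct xs) (auto intro: eqv_mult)

lemma eqv_0I: "x \<in> JU Rel \<Longrightarrow> x \<approx> 0" by (simp add: eqv_def)

lemma eqv_iff0: "x \<approx> y \<longleftrightarrow> x - y \<approx> 0" by (simp add: eqv_def)

lemma eqv_rel: "\<rho> \<in> Rel \<Longrightarrow> \<rho> \<approx> 0" by (simp add: eqv_def JU_rel)

definition cm :: "('g, 'a) nc \<Rightarrow> ('g, 'a) nc \<Rightarrow> bool" where "cm a b \<longleftrightarrow> a * b \<approx> b * a"

lemma cm_sym: "cm a b \<Longrightarrow> cm b a" by (simp add: cm_def eqv_sym)
lemma cm_const: "cm a (ncconst c)" by (simp add: cm_def ncconst_central)
lemma cm_add: "cm a x \<Longrightarrow> cm a y \<Longrightarrow> cm a (x + y)"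
  unfolding cm_def by (simp add: distrib_left distrib_right eqv_add)
lemma cm_mult: assumes "cm a x" "cm a y" shows "cm a (x * y)"
proof -
  have "a * (x * y) = (a * x) * y" by (simp add: mult.assoc)
  also have "\<dots> \<approx> (x * a) * y" using assms by (simp add: cm_def eqv_multR)
  also have "(x * a) * y = x * (a * y)" by (simp add: mult.assoc)
  also have "\<dots> \<approx> x * (y * a)" using assms by (simp add: cm_def eqv_multL)
  finally show ?thesis by (simp add: cm_def mult.assoc)
qed
lemma cm_poly: assumes "cm a x" shows "cm a (ncpoly p x)"
proof (induct p rule: pCons_induct)
  case 0 then show ?case using cm_const[of a 0] by simp
next
  case (pCons c p) then show ?case by (simp add: ncpoly_pCons cm_add cm_const cm_mult assms)
qed
lemma cm_poly2: assumes "cm x y" shows "cm (ncpoly p x) (ncpoly q y)"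
proof -
  have "cm x (ncpoly q y)" using assms by (rule cm_poly)
  then have "cm (ncpoly q y) x" by (rule cm_sym)
  then have "cm (ncpoly q y) (ncpoly p x)" by (rule cm_poly)
  then show ?thesis by (rule cm_sym)
qed
lemma cm_prod_list: "(\<And>x. x \<in> set xs \<Longrightarrow> cm a x) \<Longrightarrow> cm a (prod_list xs)"
proof (induct xs)
  case Nil then show ?case by (simp add: cm_def)
next
  case (Cons x xs) then show ?case by (simp add: cm_mult)
qed
lemma cm_use: "cm a b \<Longrightarrow> a * b \<approx> b * a" by (simp add: cm_def)

end

lemma const_mult_mult: "(ncconst a * x) * (ncconst b * y) = ncconst (a * b) * (x * (y::('g,'a::comm_ring_1) nc))"
  by (simp only: mult.assoc const_lcomm[of x] ncconst_mult)

lemma if_mult_aux: "c * (if P then x else 0) = (if P then c * x else (0::'b::mult_zero))"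
  by simp

lemma Kset_finite: "finite (Kset n r)" by (simp add: Kset_def finite_PiE)
lemma Kset_val: "k \<in> Kset n r \<Longrightarrow> i \<in> {1..n} \<Longrightarrow> k i \<in> {1..r}"
  by (auto simp: Kset_def PiE_def Pi_def)
lemma Kset_ext: "k \<in> Kset n r \<Longrightarrow> l \<in> Kset n r \<Longrightarrow> (\<And>i. i \<in> {1..n} \<Longrightarrow> k i = l i) \<Longrightarrow> k = l"
  unfolding Kset_def by (rule PiE_ext)

locale tsys = ncrel Rel + lagr u r for Rel :: "('g, 'a::idom) nc set" and u r +
  fixes n :: nat and t :: "nat \<Rightarrow> ('g, 'a) nc"
  assumes tcomm: "i \<in> {1..n} \<Longrightarrow> j \<in> {1..n} \<Longrightarrow> t i * t j \<approx> t j * t i"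
    and tmin: "i \<in> {1..n} \<Longrightarrow> prod_list (map (\<lambda>c. t i - ncconst (u c)) [1..<Suc r]) \<in> JU Rel"
begin

definition A :: "nat \<Rightarrow> nat \<Rightarrow> ('g, 'a) nc" where "A i c = ncpoly (lag u r c) (t i)"

abbreviation B where "B k \<equiv> bk u r n t k"
abbreviation K where "K \<equiv> Kset n r"

lemma ncpoly_mpoly: "i \<in> {1..n} \<Longrightarrow> ncpoly (mpoly u r) (t i) \<in> JU Rel"
  using tmin by (simp add: mpoly_def ncpoly_prod_list_map ncpoly_lin)

lemma poly_cong_t: assumes "i \<in> {1..n}" "mpoly u r dvd (p - q)" shows "ncpoly p (t i) \<approx> ncpoly q (t i)"
proof -
  obtain h where h: "p - q = mpoly u r * h" using assms(2) by (elim dvdE)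
  have "ncpoly p (t i) - ncpoly q (t i) = ncpoly (mpoly u r) (t i) * ncpoly h (t i)"
    by (simp flip: ncpoly_diff ncpoly_mult add: h)
  then show ?thesis unfolding eqv_def using ncpoly_mpoly[OF assms(1)] by (simp add: JU_right)
qed

lemma A_mult: assumes "i \<in> {1..n}" "c \<in> {1..r}" "d \<in> {1..r}"
  shows "A i c * A i d \<approx> (if c = d then A i c else 0)"
proof -
  have "A i c * A i d = ncpoly (lag u r c * lag u r d) (t i)" by (simp add: A_def ncpoly_mult)
  also have "\<dots> \<approx> ncpoly (if c = d then lag u r c else 0) (t i)"
    using assms by (intro poly_cong_t lag_mult_dvd)
  also have "ncpoly (if c = d then lag u r c else 0) (t i) = (if c = d then A i c else 0)"
    by (simp add: A_def)
  finally show ?thesis by (simp add: A_def)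
qed

lemma sum_A: "(\<Sum>c\<in>{1..r}. A i c) = 1"
proof -
  have "(\<Sum>c\<in>{1..r}. A i c) = ncpoly (\<Sum>c\<in>{1..r}. lag u r c) (t i)"
    by (simp only: A_def ncpoly_sum)
  also have "\<dots> = 1" by (simp only: sum_lag ncpoly_1)
  finally show ?thesis .
qed

lemma interp_t: assumes "i \<in> {1..n}"
  shows "ncpoly p (t i) \<approx> (\<Sum>c\<in>{1..r}. ncconst (poly p (u c)) * A i c)"
proof -
  have "ncpoly p (t i) \<approx> ncpoly (\<Sum>c\<in>{1..r}. smult (poly p (u c)) (lag u r c)) (t i)"
    using assms interp_dvd by (rule poly_cong_t)
  then show ?thesis by (simp add: ncpoly_sum ncpoly_smult A_def)
qed

lemma cm_A: "i \<in> {1..n} \<Longrightarrow> j \<in> {1..n} \<Longrightarrow> cm (A i c) (A j d)"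
  unfolding A_def by (intro cm_poly2) (simp add: cm_def tcomm)

lemma bk_eq: "B k = prod_list (map (\<lambda>i. A i (k i)) [1..<Suc n])"
  unfolding bk_def A_def lag_def
  by (simp add: ncpoly_prod_list_map ncpoly_smult ncpoly_lin o_def del: upt_Suc)

lemma K1gen: assumes "i \<in> set ys" "set ys \<subseteq> {1..n}" "c \<in> {1..r}" "\<And>j. j \<in> set ys \<Longrightarrow> l j \<in> {1..r}"
  shows "A i c * prod_list (map (\<lambda>j. A j (l j)) ys) \<approx> (if l i = c then prod_list (map (\<lambda>j. A j (l j)) ys) else 0)"
  using assms
proof (induct ys)
  case Nil then show ?case by simp
next
  case (Cons y ys)
  show ?case
  proof (cases "y = i")
    case True
    have "A i c * prod_list (map (\<lambda>j. A j (l j)) (y # ys)) = (A i c * A i (l i)) * prod_list (map (\<lambda>j. A j (l j)) ys)"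
      using True by (simp add: mult.assoc)
    also have "\<dots> \<approx> (if c = l i then A i c else 0) * prod_list (map (\<lambda>j. A j (l j)) ys)"
      by (rule eqv_multR, rule A_mult) (use Cons.prems True in auto)
    finally show ?thesis using True by (cases "c = l i") auto
  next
    case False
    then have iy: "i \<in> set ys" using Cons.prems by simp
    have "A i c * prod_list (map (\<lambda>j. A j (l j)) (y # ys)) = (A i c * A y (l y)) * prod_list (map (\<lambda>j. A j (l j)) ys)"
      by (simp add: mult.assoc)
    also have "\<dots> \<approx> (A y (l y) * A i c) * prod_list (map (\<lambda>j. A j (l j)) ys)"
      using Cons.prems iy by (intro eqv_multR cm_use cm_A) auto
    also have "\<dots> = A y (l y) * (A i c * prod_list (map (\<lambda>j. A j (l j)) ys))" by (simp add: mult.assoc)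
    also have "\<dots> \<approx> A y (l y) * (if l i = c then prod_list (map (\<lambda>j. A j (l j)) ys) else 0)"
      by (rule eqv_multL, rule Cons.hyps) (use Cons.prems iy in auto)
    finally show ?thesis by auto
  qed
qed

lemma K1: assumes "i \<in> {1..n}" "c \<in> {1..r}" "l \<in> K"
  shows "A i c * B l \<approx> (if l i = c then B l else 0)"
  unfolding bk_eq by (rule K1gen) (use assms Kset_val[OF assms(3)] in \<open>auto simp del: upt_Suc\<close>)

lemma K2gen: assumes "set ys \<subseteq> {1..n}" "\<And>j. j \<in> set ys \<Longrightarrow> k j \<in> {1..r}" "l \<in> K"
  shows "prod_list (map (\<lambda>j. A j (k j)) ys) * B l \<approx> (if \<forall>j\<in>set ys. k j = l j then B l else 0)"
  using assms
proof (induct ys)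
  case Nil then show ?case by simp
next
  case (Cons y ys)
  have "prod_list (map (\<lambda>j. A j (k j)) (y # ys)) * B l = A y (k y) * (prod_list (map (\<lambda>j. A j (k j)) ys) * B l)"
    by (simp add: mult.assoc)
  also have "\<dots> \<approx> A y (k y) * (if \<forall>j\<in>set ys. k j = l j then B l else 0)"
    by (rule eqv_multL, rule Cons.hyps) (use Cons.prems in auto)
  also have "\<dots> \<approx> (if \<forall>j\<in>set (y # ys). k j = l j then B l else 0)"
  proof (cases "\<forall>j\<in>set ys. k j = l j")
    case True
    have "A y (k y) * B l \<approx> (if l y = k y then B l else 0)"
      by (rule K1) (use Cons.prems in auto)
    moreover have "(if \<forall>j\<in>set (y # ys). k j = l j then B l else 0) = (if l y = k y then B l else 0)"
      using True by auto
    ultimately show ?thesis using True by simp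
  next
    case False
    moreover have "\<not> (\<forall>j\<in>set (y # ys). k j = l j)" using False by auto
    ultimately show ?thesis by (simp only: if_not_P if_False mult_zero_right eqv_refl)
  qed
  finally show ?case .
qed

lemma K2: assumes "k \<in> K" "l \<in> K" shows "B k * B l \<approx> (if k = l then B l else 0)"
proof -
  have "B k * B l \<approx> (if \<forall>j\<in>set [1..<Suc n]. k j = l j then B l else 0)"
    unfolding bk_eq[of k] by (rule K2gen) (use assms Kset_val[OF assms(1)] in \<open>auto simp del: upt_Suc\<close>)
  also have "(\<forall>j\<in>set [1..<Suc n]. k j = l j) \<longleftrightarrow> k = l"
    using Kset_ext[OF assms] by (auto simp del: upt_Suc simp: atLeastLessThanSuc_atLeastAtMost)
  finally show ?thesis .
qed

lemma K3: "(\<Sum>k\<in>K. B k) = 1"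
proof -
  have "(1::('g,'a) nc) = prod_list (map (\<lambda>i. \<Sum>c\<in>{1..r}. A i c) [1..<Suc n])"
    by (simp only: sum_A prod_list_map_1)
  also have "\<dots> = (\<Sum>g\<in>PiE (set [1..<Suc n]) (\<lambda>_. {1..r}). prod_list (map (\<lambda>i. A i (g i)) [1..<Suc n]))"
    by (rule prod_list_sum_PiE) auto
  also have "\<dots> = (\<Sum>k\<in>K. B k)"
    by (simp add: bk_eq Kset_def atLeastLessThanSuc_atLeastAtMost del: upt_Suc)
  finally show ?thesis by simp
qed

definition D :: "((nat \<Rightarrow> nat) \<Rightarrow> 'a) \<Rightarrow> ('g, 'a) nc" where
  "D f = (\<Sum>k\<in>K. ncconst (f k) * B k)"

lemma D_cong: "(\<And>k. k \<in> K \<Longrightarrow> f k = g k) \<Longrightarrow> D f = D g"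
  unfolding D_def by (intro sum.cong) auto

lemma D_add: "D (\<lambda>k. f k + g k) = D f + D g"
  by (simp add: D_def ncconst_add distrib_right sum.distrib)

lemma D_diff: "D (\<lambda>k. f k - g k) = D f - D g"
  by (simp add: D_def ncconst_diff left_diff_distrib sum_subtractf)

lemma D_uminus: "D (\<lambda>k. - f k) = - D f"
  by (simp add: D_def ncconst_uminus sum_negf)

lemma D_smult: "ncconst a * D f = D (\<lambda>k. a * f k)"
  by (simp add: D_def sum_distrib_left ncconst_mult mult.assoc)

lemma D_0: "D (\<lambda>k. 0) = 0" by (simp add: D_def)

lemma D_1: "D (\<lambda>k. 1) = 1" by (simp add: D_def K3)

lemma D_sum: "(\<Sum>c\<in>C. D (f c)) = D (\<lambda>k. \<Sum>c\<in>C. f c k)"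
  by (induct C rule: infinite_finite_induct) (simp_all add: D_0 D_add)

lemma D_single: assumes "l \<in> K" shows "D (\<lambda>k. if k = l then 1 else 0) = B l"
proof -
  have "D (\<lambda>k. if k = l then 1 else 0) = (\<Sum>k\<in>K. if k = l then B k else 0)"
    unfolding D_def by (intro sum.cong refl) simp
  then show ?thesis using assms by (simp add: Kset_finite)
qed

lemma D_mult: "D f * D g \<approx> D (\<lambda>k. f k * g k)"
proof -
  have "D f * D g = (\<Sum>k\<in>K. \<Sum>l\<in>K. ncconst (f k * g l) * (B k * B l))"
    unfolding D_def sum_product by (simp only: const_mult_mult)
  also have "\<dots> \<approx> (\<Sum>k\<in>K. \<Sum>l\<in>K. ncconst (f k * g l) * (if k = l then B l else 0))"
    by (rule eqv_sum, rule eqv_sum, rule eqv_multL, rule K2)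
  also have "\<dots> = (\<Sum>k\<in>K. \<Sum>l\<in>K. if k = l then ncconst (f k * g l) * B l else 0)"
    by (simp only: if_mult_aux)
  also have "\<dots> = D (\<lambda>k. f k * g k)"
    unfolding D_def by (intro sum.cong refl) (simp add: Kset_finite)
  finally show ?thesis .
qed

lemma A_D: assumes "i \<in> {1..n}" "c \<in> {1..r}" shows "A i c \<approx> D (\<lambda>k. if k i = c then 1 else 0)"
proof -
  have "A i c = A i c * (\<Sum>l\<in>K. B l)" by (simp add: K3)
  also have "\<dots> = (\<Sum>l\<in>K. A i c * B l)" by (simp add: sum_distrib_left)
  also have "\<dots> \<approx> (\<Sum>l\<in>K. if l i = c then B l else 0)"
    using assms by (intro eqv_sum K1)
  also have "\<dots> = D (\<lambda>k. if k i = c then 1 else 0)"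
    unfolding D_def by (intro sum.cong refl) simp
  finally show ?thesis .
qed

lemma poly_D: assumes "i \<in> {1..n}" shows "ncpoly p (t i) \<approx> D (\<lambda>k. poly p (u (k i)))"
proof -
  have "ncpoly p (t i) \<approx> (\<Sum>c\<in>{1..r}. ncconst (poly p (u c)) * A i c)"
    using assms by (rule interp_t)
  also have "\<dots> \<approx> (\<Sum>c\<in>{1..r}. ncconst (poly p (u c)) * D (\<lambda>k. if k i = c then 1 else 0))"
    using assms by (intro eqv_sum eqv_multL A_D) auto
  also have "\<dots> = D (\<lambda>k. \<Sum>c\<in>{1..r}. poly p (u c) * (if k i = c then 1 else 0))"
    by (simp add: D_smult D_sum)
  also have "\<dots> = D (\<lambda>k. poly p (u (k i)))"
  proof (rule D_cong)
    fix k assume "k \<in> K"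
    then have "k i \<in> {1..r}" using assms by (rule Kset_val)
    have "(\<Sum>c\<in>{1..r}. poly p (u c) * (if k i = c then 1 else 0)) = (\<Sum>c\<in>{1..r}. if k i = c then poly p (u c) else 0)"
      by (intro sum.cong refl) simp
    then show "(\<Sum>c\<in>{1..r}. poly p (u c) * (if k i = c then 1 else 0)) = poly p (u (k i))"
      using \<open>k i \<in> {1..r}\<close> by simp
  qed
  finally show ?thesis .
qed

lemma t_D: assumes "i \<in> {1..n}" shows "t i \<approx> D (\<lambda>k. u (k i))"
  using poly_D[OF assms, of "[:0, 1:]"] by (simp add: ncpoly_X)

lemma D_comm: "D f * D g \<approx> D g * D f"
proof -
  have "D f * D g \<approx> D (\<lambda>k. f k * g k)" by (rule D_mult)
  also have "\<dots> = D (\<lambda>k. g k * f k)" by (simp add: mult.commute)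
  also have "\<dots> \<approx> D g * D f" by (rule eqv_sym, rule D_mult)
  finally show ?thesis .
qed

lemma D_mult_sym: "D (\<lambda>k. f k * g k) \<approx> D f * D g" by (rule eqv_sym, rule D_mult)

end

lemma sw_sw [simp]: "sw i (sw i x) = x" by (simp add: sw_def)

lemma sw_range: "i \<in> {1..n-1} \<Longrightarrow> x \<in> {1..n} \<Longrightarrow> sw i x \<in> {1..n}"
  by (auto simp: sw_def)

lemma sw_out: "i \<in> {1..n-1} \<Longrightarrow> x \<notin> {1..n} \<Longrightarrow> sw i x = x"
  by (auto simp: sw_def)

lemma Kset_sw: assumes "i \<in> {1..n-1}" "k \<in> Kset n r" shows "k \<circ> sw i \<in> Kset n r"
  using assms unfolding Kset_def PiE_def Pi_def extensional_def
  by (auto simp: sw_def split: if_splits)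

lemma comp_sw_sw [simp]: "k \<circ> sw i \<circ> sw i = k"
  by (simp add: fun_eq_iff)

definition fs :: "nat \<Rightarrow> ((nat \<Rightarrow> nat) \<Rightarrow> 'a) \<Rightarrow> (nat \<Rightarrow> nat) \<Rightarrow> 'a" where
  "fs i f = (\<lambda>k. f (k \<circ> sw i))"

lemma fs_fs [simp]: "fs i (fs i f) = f"
  by (simp add: fs_def o_assoc)

lemma prod_list_ind: "prod_list (map (\<lambda>j. if P j then 1 else 0) xs) = (if \<forall>j\<in>set xs. P j then 1 else (0::'b::semiring_1))"
  by (induct xs) auto

context ncrel
begin

lemma intertw_poly: assumes "X * x \<approx> y * X" shows "X * ncpoly p x \<approx> ncpoly p y * X"
proof (induct p rule: pCons_induct)
  case 0 then show ?case by simp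
next
  case (pCons a p)
  have "X * ncpoly (pCons a p) x = ncconst a * X + (X * x) * ncpoly p x"
    by (simp add: ncpoly_pCons distrib_left ncconst_central mult.assoc)
  also have "\<dots> \<approx> ncconst a * X + (y * X) * ncpoly p x"
    by (intro eqv_add eqv_multR assms eqv_refl)
  also have "(y * X) * ncpoly p x = y * (X * ncpoly p x)" by (simp add: mult.assoc)
  also have "ncconst a * X + \<dots> \<approx> ncconst a * X + y * (ncpoly p y * X)"
    by (intro eqv_add eqv_multL pCons(2) eqv_refl)
  also have "\<dots> = ncpoly (pCons a p) y * X"
    by (simp add: ncpoly_pCons distrib_right mult.assoc)
  finally show ?case .
qed

lemma intertw_prod_list: assumes "\<And>j. j \<in> set xs \<Longrightarrow> X * f j \<approx> g j * X"
  shows "X * prod_list (map f xs) \<approx> prod_list (map g xs) * X"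
  using assms
proof (induct xs)
  case Nil then show ?case by simp
next
  case (Cons x xs)
  have "X * prod_list (map f (x # xs)) = (X * f x) * prod_list (map f xs)" by (simp add: mult.assoc)
  also have "\<dots> \<approx> (g x * X) * prod_list (map f xs)" by (intro eqv_multR Cons.prems) simp
  also have "\<dots> = g x * (X * prod_list (map f xs))" by (simp add: mult.assoc)
  also have "\<dots> \<approx> g x * (prod_list (map g xs) * X)"
    by (rule eqv_multL, rule Cons.hyps) (use Cons.prems in auto)
  also have "\<dots> = prod_list (map g (x # xs)) * X" by (simp add: mult.assoc)
  finally show ?case .
qed

end

context tsys
begin

lemma D_prod_list: "prod_list (map (\<lambda>j. D (F j)) xs) \<approx> D (\<lambda>k. prod_list (map (\<lambda>j. F j k) xs))"
proof (induct xs)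
  case Nil then show ?case by (simp add: D_1)
next
  case (Cons x xs)
  have "prod_list (map (\<lambda>j. D (F j)) (x # xs)) = D (F x) * prod_list (map (\<lambda>j. D (F j)) xs)" by simp
  also have "\<dots> \<approx> D (F x) * D (\<lambda>k. prod_list (map (\<lambda>j. F j k) xs))" by (intro eqv_multL Cons)
  also have "\<dots> \<approx> D (\<lambda>k. F x k * prod_list (map (\<lambda>j. F j k) xs))" by (rule D_mult)
  finally show ?case by simp
qed

lemma D_reindex: assumes "i \<in> {1..n-1}"
  shows "(\<Sum>k\<in>K. ncconst (f k) * B (k \<circ> sw i)) = D (fs i f)"
  unfolding D_def fs_def
  by (rule sum.reindex_bij_witness[of _ "\<lambda>k. k \<circ> sw i" "\<lambda>k. k \<circ> sw i"])
     (use assms Kset_sw in auto)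

lemma G2:
  assumes i: "i \<in> {1..n-1}" and X: "\<And>j. j \<in> {1..n} \<Longrightarrow> X * t j \<approx> t (sw i j) * X"
  shows "X * D f \<approx> D (fs i f) * X"
proof -
  have XA: "X * A j c \<approx> A (sw i j) c * X" if "j \<in> {1..n}" for j c
    unfolding A_def by (intro intertw_poly X that)
  have XB: "X * B k \<approx> B (k \<circ> sw i) * X" if k: "k \<in> K" for k
  proof -
    have XP: "X * B k \<approx> prod_list (map (\<lambda>j. A (sw i j) (k j)) [1..<Suc n]) * X"
      unfolding bk_eq by (rule intertw_prod_list, rule XA) (auto simp del: upt_Suc)
    have "prod_list (map (\<lambda>j. A (sw i j) (k j)) [1..<Suc n])
       \<approx> prod_list (map (\<lambda>j. D (\<lambda>l. if l (sw i j) = k j then 1 else 0)) [1..<Suc n])"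
      by (rule eqv_prod_list, rule A_D) (use i k Kset_val sw_range in \<open>auto simp del: upt_Suc\<close>)
    also have "\<dots> \<approx> D (\<lambda>l. prod_list (map (\<lambda>j. if l (sw i j) = k j then 1 else 0) [1..<Suc n]))"
      by (rule D_prod_list)
    also have "\<dots> = D (\<lambda>l. if l = k \<circ> sw i then 1 else 0)"
    proof (rule D_cong)
      fix l assume l: "l \<in> K"
      have "(\<forall>j\<in>set [1..<Suc n]. l (sw i j) = k j) \<longleftrightarrow> l = k \<circ> sw i"
      proof
        assume h: "\<forall>j\<in>set [1..<Suc n]. l (sw i j) = k j"
        show "l = k \<circ> sw i"
        proof (rule Kset_ext[OF l Kset_sw[OF i k]])
          fix j assume j: "j \<in> {1..n}"
          then have "sw i j \<in> set [1..<Suc n]" using sw_range[OF i j] by auto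
          then show "l j = (k \<circ> sw i) j" using h by fastforce
        qed
      qed auto
      then show "prod_list (map (\<lambda>j. if l (sw i j) = k j then 1 else 0) [1..<Suc n]) = (if l = k \<circ> sw i then 1 else (0::'a))"
        by (simp only: prod_list_ind)
    qed
    also have "\<dots> = B (k \<circ> sw i)" using Kset_sw[OF i k] by (rule D_single)
    finally have "prod_list (map (\<lambda>j. A (sw i j) (k j)) [1..<Suc n]) \<approx> B (k \<circ> sw i)" .
    then show ?thesis using XP by (meson eqv_trans eqv_multR)
  qed
  have "X * D f = (\<Sum>k\<in>K. ncconst (f k) * (X * B k))"
    unfolding D_def by (simp add: sum_distrib_left const_lcomm)
  also have "\<dots> \<approx> (\<Sum>k\<in>K. ncconst (f k) * (B (k \<circ> sw i) * X))"
    by (rule eqv_sum, rule eqv_multL, rule XB)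
  also have "\<dots> = (\<Sum>k\<in>K. ncconst (f k) * B (k \<circ> sw i)) * X"
    by (simp add: sum_distrib_right mult.assoc)
  also have "\<dots> = D (fs i f) * X" using i by (simp add: D_reindex)
  finally show ?thesis .
qed

lemma G2': 
  assumes i: "i \<in> {1..n-1}" and X: "\<And>j. j \<in> {1..n} \<Longrightarrow> X * t j \<approx> t (sw i j) * X"
  shows "D f * X \<approx> X * D (fs i f)"
  using G2[OF i X, of "fs i f"] by (simp add: eqv_sym)

lemma triple:
  assumes Ga: "\<And>f. X * D f \<approx> D (fs a f) * X" and Ga': "\<And>f. D f * X \<approx> X * D (fs a f)"
    and Gb: "\<And>f. Y * D f \<approx> D (fs b f) * Y" and Gb': "\<And>f. D f * Y \<approx> Y * D (fs b f)"
    and Q: "X * X \<approx> 1 + X * D E"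
  shows "(X - D P) * (Y - D R) * (X - D P) \<approx>
     X * Y * X - X * Y * D P - Y * X * D (fs a (fs b P))
     + X * D (\<lambda>k. - E k * fs a R k + R k * P k + fs a (\<lambda>k. P k * R k) k)
     + Y * D (\<lambda>k. fs b P k * P k) - D (\<lambda>k. fs a R k + P k * R k * P k)"
proof -
  have e: "(X - D P) * (Y - D R) * (X - D P) =
      X * Y * X - X * Y * D P - X * (D R * X) + X * (D R * D P) - (D P * Y) * X + (D P * Y) * D P
      + (D P * D R) * X - (D P * D R) * D P"
    by (simp add: algebra_simps)
  have t3: "X * (D R * X) \<approx> D (fs a R) + X * D (\<lambda>k. E k * fs a R k)"
  proof -
    have "X * (D R * X) \<approx> X * (X * D (fs a R))" by (intro eqv_multL Ga')
    also have "\<dots> = (X * X) * D (fs a R)" by (simp add: mult.assoc)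
    also have "\<dots> \<approx> (1 + X * D E) * D (fs a R)" by (intro eqv_multR Q)
    also have "\<dots> = D (fs a R) + X * (D E * D (fs a R))" by (simp add: algebra_simps)
    also have "\<dots> \<approx> D (fs a R) + X * D (\<lambda>k. E k * fs a R k)" by (intro eqv_add eqv_refl eqv_multL D_mult)
    finally show ?thesis .
  qed
  have t4: "X * (D R * D P) \<approx> X * D (\<lambda>k. R k * P k)" by (intro eqv_multL D_mult)
  have t5: "(D P * Y) * X \<approx> Y * X * D (fs a (fs b P))"
  proof -
    have "(D P * Y) * X \<approx> (Y * D (fs b P)) * X" by (intro eqv_multR Gb')
    also have "\<dots> = Y * (D (fs b P) * X)" by (simp add: mult.assoc)
    also have "\<dots> \<approx> Y * (X * D (fs a (fs b P)))" by (intro eqv_multL Ga')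
    finally show ?thesis by (simp add: mult.assoc)
  qed
  have t6: "(D P * Y) * D P \<approx> Y * D (\<lambda>k. fs b P k * P k)"
  proof -
    have "(D P * Y) * D P \<approx> (Y * D (fs b P)) * D P" by (intro eqv_multR Gb')
    also have "\<dots> = Y * (D (fs b P) * D P)" by (simp add: mult.assoc)
    also have "\<dots> \<approx> Y * D (\<lambda>k. fs b P k * P k)" by (intro eqv_multL D_mult)
    finally show ?thesis .
  qed
  have t7: "(D P * D R) * X \<approx> X * D (fs a (\<lambda>k. P k * R k))"
  proof -
    have "(D P * D R) * X \<approx> D (\<lambda>k. P k * R k) * X" by (intro eqv_multR D_mult)
    also have "\<dots> \<approx> X * D (fs a (\<lambda>k. P k * R k))" by (rule Ga')
    finally show ?thesis .
  qed
  have t8: "(D P * D R) * D P \<approx> D (\<lambda>k. P k * R k * P k)"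
  proof -
    have "(D P * D R) * D P \<approx> D (\<lambda>k. P k * R k) * D P" by (intro eqv_multR D_mult)
    also have "\<dots> \<approx> D (\<lambda>k. P k * R k * P k)" by (rule D_mult)
    finally show ?thesis .
  qed
  have "(X - D P) * (Y - D R) * (X - D P) \<approx>
      X * Y * X - X * Y * D P - (D (fs a R) + X * D (\<lambda>k. E k * fs a R k)) + X * D (\<lambda>k. R k * P k)
      - Y * X * D (fs a (fs b P)) + Y * D (\<lambda>k. fs b P k * P k)
      + X * D (fs a (\<lambda>k. P k * R k)) - D (\<lambda>k. P k * R k * P k)"
    unfolding e by (intro eqv_add eqv_diff eqv_refl t3 t4 t5 t6 t7 t8)
  also have "\<dots> = X * Y * X - X * Y * D P - Y * X * D (fs a (fs b P))
     + X * D (\<lambda>k. - E k * fs a R k + R k * P k + fs a (\<lambda>k. P k * R k) k)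
     + Y * D (\<lambda>k. fs b P k * P k) - D (\<lambda>k. fs a R k + P k * R k * P k)"
  proof -
    have d1: "D (\<lambda>k. - E k * fs a R k + R k * P k + fs a (\<lambda>k. P k * R k) k) =
       - D (\<lambda>k. E k * fs a R k) + D (\<lambda>k. R k * P k) + D (fs a (\<lambda>k. P k * R k))"
      by (simp only: D_add D_uminus mult_minus_left)
    have d2: "D (\<lambda>k. fs a R k + P k * R k * P k) = D (fs a R) + D (\<lambda>k. P k * R k * P k)"
      by (simp only: D_add)
    show ?thesis unfolding d1 d2 by (simp add: algebra_simps)
  qed
  finally show ?thesis .
qed

end

definition HcG :: "(nat \<Rightarrow> 'a::comm_ring_1) \<Rightarrow> nat \<Rightarrow> 'a \<Rightarrow> (nat \<Rightarrow> ('g, 'a) nc) \<Rightarrow> nat \<Rightarrow> ('g, 'a) nc" where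
  "HcG u r q t j = ncmul (ncconst (ring_inv (Delta u r) ^ 2))
     (\<Sum>(c1, c2)\<in>{(c1, c2). 1 \<le> c1 \<and> c1 < c2 \<and> c2 \<le> r}.
        ncmul (ncconst ((u c2 - u c1) * (q - ring_inv q)))
          (ncmul (ncpoly (Fpoly u r c1) (t (j - 1))) (ncpoly (Fpoly u r c2) (t j))))"

lemma Hcorr_HcG: "Hcorr u r q j = HcG u r q (\<lambda>i. ncgen (Ht i)) j"
  by (simp add: Hcorr_def HcG_def)

lemma pairs_finite: "finite {(c1, c2). 1 \<le> c1 \<and> c1 < c2 \<and> c2 \<le> (r::nat)}"
  by (rule finite_subset[of _ "{1..r} \<times> {1..r}"]) auto

locale hsys = tsys Rel u r n t for Rel :: "('g, 'a::idom) nc set" and u r n t +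
  fixes q :: 'a
  assumes qunit: "q dvd 1"
begin

definition cc where "cc = q - ring_inv q"
definition gam :: "nat \<Rightarrow> (nat \<Rightarrow> nat) \<Rightarrow> 'a" where "gam i = (\<lambda>k. if k i < k (Suc i) then - cc else 0)"
definition ee :: "nat \<Rightarrow> (nat \<Rightarrow> nat) \<Rightarrow> 'a" where "ee i = (\<lambda>k. if k i = k (Suc i) then 1 else 0)"
definition hh :: "nat \<Rightarrow> (nat \<Rightarrow> nat) \<Rightarrow> 'a" where "hh i = (\<lambda>k. if k i < k (Suc i) then (u (k (Suc i)) - u (k i)) * cc else 0)"

definition tw where "tw i X \<longleftrightarrow> (\<forall>j\<in>{1..n}. X * t j \<approx> t (sw i j) * X)"

lemma sum_filter_D: "(\<Sum>k\<in>{k\<in>K. P k}. B k) = D (\<lambda>k. if P k then 1 else 0)"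
proof -
  have "(\<Sum>k\<in>K. ncconst (if P k then 1 else 0) * B k) = (\<Sum>k\<in>K. if P k then B k else 0)"
    by (intro sum.cong refl) simp
  then show ?thesis by (simp add: D_def sum.inter_filter[OF Kset_finite])
qed

lemma Bprime_D: "Bprime u r n q t i (Suc i) = D (gam i)"
  unfolding Bprime_def ncmul_eq sum_filter_D D_smult cc_def[symmetric] gam_def
  by (intro D_cong) simp

lemma eel_D: "eel u r n t i = D (ee i)"
  unfolding eel_def sum_filter_D ee_def ..

lemma Fpoly_D: assumes "i \<in> {1..n}" "c \<in> {1..r}"
  shows "ncpoly (Fpoly u r c) (t i) \<approx> D (\<lambda>k. if k i = c then Delta u r else 0)"
proof -
  have "ncpoly (Fpoly u r c) (t i) \<approx> D (\<lambda>k. poly (Fpoly u r c) (u (k i)))" using assms(1) by (rule poly_D)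
  also have "\<dots> = D (\<lambda>k. if k i = c then Delta u r else 0)"
  proof (rule D_cong)
    fix k assume "k \<in> K"
    then have "k i \<in> {1..r}" using assms(1) by (rule Kset_val)
    then show "poly (Fpoly u r c) (u (k i)) = (if k i = c then Delta u r else 0)"
      using assms(2) by (auto simp: Fpoly_eq poly_lag)
  qed
  finally show ?thesis .
qed

lemma HcG_D: assumes j: "j \<in> {2..n}" shows "HcG u r q t j \<approx> D (hh (j - 1))"
proof -
  let ?P = "{(c1, c2). 1 \<le> c1 \<and> c1 < c2 \<and> c2 \<le> r}"
  have j1: "j - 1 \<in> {1..n}" "j \<in> {1..n}" using j by auto
  have "HcG u r q t j = ncconst (ring_inv (Delta u r) ^ 2) *
     (\<Sum>p\<in>?P. ncconst ((u (snd p) - u (fst p)) * cc) *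
        (ncpoly (Fpoly u r (fst p)) (t (j - 1)) * ncpoly (Fpoly u r (snd p)) (t j)))"
    unfolding HcG_def cc_def by (simp add: case_prod_unfold)
  also have "\<dots> \<approx> ncconst (ring_inv (Delta u r) ^ 2) *
     (\<Sum>p\<in>?P. ncconst ((u (snd p) - u (fst p)) * cc) *
        (D (\<lambda>k. if k (j - 1) = fst p then Delta u r else 0) * D (\<lambda>k. if k j = snd p then Delta u r else 0)))"
    by (rule eqv_multL, rule eqv_sum, rule eqv_multL, rule eqv_mult; rule Fpoly_D) (use j1 in auto)
  also have "\<dots> \<approx> ncconst (ring_inv (Delta u r) ^ 2) *
     (\<Sum>p\<in>?P. ncconst ((u (snd p) - u (fst p)) * cc) *
        D (\<lambda>k. (if k (j - 1) = fst p then Delta u r else 0) * (if k j = snd p then Delta u r else 0)))"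
    by (rule eqv_multL, rule eqv_sum, rule eqv_multL, rule D_mult)
  also have "\<dots> = D (\<lambda>k. ring_inv (Delta u r) ^ 2 * (\<Sum>p\<in>?P. (u (snd p) - u (fst p)) * cc *
        ((if k (j - 1) = fst p then Delta u r else 0) * (if k j = snd p then Delta u r else 0))))"
    by (simp only: D_smult D_sum)
  also have "\<dots> = D (hh (j - 1))"
  proof (rule D_cong)
    fix k assume k: "k \<in> K"
    have kv: "k (j - 1) \<in> {1..r}" "k j \<in> {1..r}" using Kset_val[OF k] j1 by auto
    have "(\<Sum>p\<in>?P. (u (snd p) - u (fst p)) * cc *
        ((if k (j - 1) = fst p then Delta u r else 0) * (if k j = snd p then Delta u r else 0)))
      = (\<Sum>p\<in>?P. if p = (k (j - 1), k j) then (u (k j) - u (k (j - 1))) * cc * (Delta u r * Delta u r) else 0)"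
      by (intro sum.cong refl) auto
    also have "\<dots> = (if k (j - 1) < k j then (u (k j) - u (k (j - 1))) * cc * (Delta u r * Delta u r) else 0)"
      using kv pairs_finite[of r] by (simp add: sum.delta')
    finally have "ring_inv (Delta u r) ^ 2 * (\<Sum>p\<in>?P. (u (snd p) - u (fst p)) * cc *
        ((if k (j - 1) = fst p then Delta u r else 0) * (if k j = snd p then Delta u r else 0)))
      = (if k (j - 1) < k j then (u (k j) - u (k (j - 1))) * cc * ((ring_inv (Delta u r) * Delta u r) * (ring_inv (Delta u r) * Delta u r)) else 0)"
      by (simp add: power2_eq_square algebra_simps)
    also have "\<dots> = hh (j - 1) k"
      using j ring_inv_eq'[OF Dunit] by (simp add: hh_def)
    finally show "ring_inv (Delta u r) ^ 2 * (\<Sum>p\<in>?P. (u (snd p) - u (fst p)) * cc *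
        ((if k (j - 1) = fst p then Delta u r else 0) * (if k j = snd p then Delta u r else 0))) = hh (j - 1) k" .
  qed
  finally show ?thesis .
qed

definition corr :: "nat \<Rightarrow> nat \<Rightarrow> (nat \<Rightarrow> nat) \<Rightarrow> 'a" where
  "corr i m = (if m = Suc i then hh i else if m = i then (\<lambda>k. - hh i k) else (\<lambda>k. 0))"

lemma R_t: assumes i: "i \<in> {1..n-1}" and m: "m \<in> {1..n}"
  shows "(X - D (gam i)) * t m - t (sw i m) * (X - D (gam i)) - D (corr i m) \<approx> X * t m - t (sw i m) * X"
proof -
  have sm: "sw i m \<in> {1..n}" using sw_range[OF i m] .
  have "D (gam i) * t m \<approx> D (gam i) * D (\<lambda>k. u (k m))" by (intro eqv_multL t_D m)
  also have "\<dots> \<approx> D (\<lambda>k. gam i k * u (k m))" by (rule D_mult)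
  finally have a1: "D (gam i) * t m \<approx> D (\<lambda>k. gam i k * u (k m))" .
  have "t (sw i m) * D (gam i) \<approx> D (\<lambda>k. u (k (sw i m))) * D (gam i)" by (intro eqv_multR t_D sm)
  also have "\<dots> \<approx> D (\<lambda>k. u (k (sw i m)) * gam i k)" by (rule D_mult)
  finally have a2: "t (sw i m) * D (gam i) \<approx> D (\<lambda>k. u (k (sw i m)) * gam i k)" .
  have z: "D (\<lambda>k. gam i k * u (k m)) - D (\<lambda>k. u (k (sw i m)) * gam i k) + D (corr i m) = 0"
  proof -
    have "D (\<lambda>k. gam i k * u (k m)) - D (\<lambda>k. u (k (sw i m)) * gam i k) + D (corr i m)
       = D (\<lambda>k. gam i k * u (k m) - u (k (sw i m)) * gam i k + corr i m k)"
      by (simp only: D_add D_diff)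
    also have "\<dots> = D (\<lambda>k. 0)"
      by (intro D_cong) (auto simp: gam_def corr_def hh_def sw_def algebra_simps)
    finally show ?thesis by (simp add: D_0)
  qed
  have "(X - D (gam i)) * t m - t (sw i m) * (X - D (gam i)) - D (corr i m)
     = X * t m - t (sw i m) * X - (D (gam i) * t m - t (sw i m) * D (gam i) + D (corr i m))"
    by (simp add: algebra_simps)
  also have "\<dots> \<approx> X * t m - t (sw i m) * X - (D (\<lambda>k. gam i k * u (k m)) - D (\<lambda>k. u (k (sw i m)) * gam i k) + D (corr i m))"
    by (intro eqv_diff eqv_add a1 a2 eqv_refl)
  also have "\<dots> = X * t m - t (sw i m) * X" by (simp only: z diff_zero)
  finally show ?thesis .
qed

lemma ncconst_D: "ncconst a = D (\<lambda>k. a)"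
  using D_smult[of a "\<lambda>k. 1"] by (simp add: D_1)

lemma R_quad: assumes i: "i \<in> {1..n-1}" and X: "tw i X"
  shows "(X - D (gam i)) * (X - D (gam i)) - ncconst cc * (X - D (gam i)) - 1
     \<approx> X * X - 1 - ncconst cc * (D (ee i) * X)"
proof -
  have G: "X * D f \<approx> D (fs i f) * X" for f using G2[OF i] X unfolding tw_def by blast
  have "(X - D (gam i)) * (X - D (gam i)) - ncconst cc * (X - D (gam i)) - 1
     = X * X - X * D (gam i) - D (gam i) * X + D (gam i) * D (gam i) - ncconst cc * X + ncconst cc * D (gam i) - 1"
    by (simp add: algebra_simps)
  also have "\<dots> \<approx> X * X - D (fs i (gam i)) * X - D (gam i) * X + D (\<lambda>k. gam i k * gam i k) - ncconst cc * X + D (\<lambda>k. cc * gam i k) - 1"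
    by (intro eqv_add eqv_diff eqv_refl G D_mult) (simp add: D_smult)
  also have "\<dots> = X * X - (D (fs i (gam i)) + D (gam i) + ncconst cc) * X + (D (\<lambda>k. gam i k * gam i k) + D (\<lambda>k. cc * gam i k)) - 1"
    by (simp add: algebra_simps)
  also have "D (fs i (gam i)) + D (gam i) + ncconst cc = ncconst cc * D (ee i)"
  proof -
    have "D (fs i (gam i)) + D (gam i) + ncconst cc = D (\<lambda>k. fs i (gam i) k + gam i k + cc)"
      by (simp only: ncconst_D D_add)
    also have "\<dots> = D (\<lambda>k. cc * ee i k)"
      by (intro D_cong) (auto simp: fs_def gam_def ee_def sw_def)
    finally show ?thesis by (simp add: D_smult)
  qed
  also have "D (\<lambda>k. gam i k * gam i k) + D (\<lambda>k. cc * gam i k) = 0"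
  proof -
    have "D (\<lambda>k. gam i k * gam i k) + D (\<lambda>k. cc * gam i k) = D (\<lambda>k. gam i k * gam i k + cc * gam i k)"
      by (simp only: D_add)
    also have "\<dots> = D (\<lambda>k. 0)" by (intro D_cong) (auto simp: gam_def)
    finally show ?thesis by (simp add: D_0)
  qed
  also have "X * X - ncconst cc * D (ee i) * X + 0 - 1 = X * X - 1 - ncconst cc * (D (ee i) * X)"
    by (simp add: algebra_simps)
  finally show ?thesis .
qed

lemma R_far: assumes i: "i \<in> {1..n-1}" and j: "j \<in> {1..n-1}" and ij: "i + 2 \<le> j \<or> j + 2 \<le> i"
  and Xi: "tw i X" and Xj: "tw j Y"
  shows "(X - D (gam i)) * (Y - D (gam j)) - (Y - D (gam j)) * (X - D (gam i)) \<approx> X * Y - Y * X"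
proof -
  have fij: "fs i (gam j) = gam j" using ij by (auto simp: fs_def gam_def sw_def fun_eq_iff)
  have fji: "fs j (gam i) = gam i" using ij by (auto simp: fs_def gam_def sw_def fun_eq_iff)
  have a: "X * D (gam j) \<approx> D (gam j) * X" using G2[OF i, of X "gam j"] Xi fij unfolding tw_def by simp
  have b: "Y * D (gam i) \<approx> D (gam i) * Y" using G2[OF j, of Y "gam i"] Xj fji unfolding tw_def by simp
  have "(X - D (gam i)) * (Y - D (gam j)) - (Y - D (gam j)) * (X - D (gam i))
     = X * Y - Y * X - X * D (gam j) + D (gam j) * X + Y * D (gam i) - D (gam i) * Y + (D (gam i) * D (gam j) - D (gam j) * D (gam i))"
    by (simp add: algebra_simps)
  also have "\<dots> \<approx> X * Y - Y * X - D (gam j) * X + D (gam j) * X + D (gam i) * Y - D (gam i) * Y + (D (gam j) * D (gam i) - D (gam j) * D (gam i))"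
    by (intro eqv_add eqv_diff eqv_refl a b D_comm)
  also have "\<dots> = X * Y - Y * X" by simp
  finally show ?thesis .
qed

lemma fs_ee: "fs i (ee i) = ee i"
  by (auto simp: fs_def ee_def sw_def fun_eq_iff)

lemma quad_conv: assumes i: "i \<in> {1..n-1}" and X: "tw i X"
  and Q: "X * X - 1 - ncconst cc * (D (ee i) * X) \<approx> 0"
  shows "X * X \<approx> 1 + X * D (\<lambda>k. cc * ee i k)"
proof -
  have G': "D f * X \<approx> X * D (fs i f)" for f using G2'[OF i] X unfolding tw_def by blast
  have "X * X = (X * X - 1 - ncconst cc * (D (ee i) * X)) + (1 + ncconst cc * (D (ee i) * X))" by simp
  also have "\<dots> \<approx> 0 + (1 + ncconst cc * (X * D (fs i (ee i))))"
    by (intro eqv_add Q eqv_refl eqv_multL G')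
  also have "\<dots> = 1 + X * D (\<lambda>k. cc * ee i k)"
    by (simp only: fs_ee add_0_left flip: D_smult) (simp only: const_lcomm)
  finally show ?thesis .
qed

lemma R_braid: assumes a: "a \<in> {1..n-2}" and Xa: "tw a X" and Yb: "tw (Suc a) Y"
  and Qa: "X * X - 1 - ncconst cc * (D (ee a) * X) \<approx> 0"
  and Qb: "Y * Y - 1 - ncconst cc * (D (ee (Suc a)) * Y) \<approx> 0"
  shows "(X - D (gam a)) * (Y - D (gam (Suc a))) * (X - D (gam a)) - (Y - D (gam (Suc a))) * (X - D (gam a)) * (Y - D (gam (Suc a)))
    \<approx> X * Y * X - Y * X * Y"
proof -
  let ?b = "Suc a"
  have ia: "a \<in> {1..n-1}" and ib: "?b \<in> {1..n-1}" using a by auto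
  have Ga: "X * D f \<approx> D (fs a f) * X" and Ga': "D f * X \<approx> X * D (fs a f)" for f
    using G2[OF ia] G2'[OF ia] Xa unfolding tw_def by blast+
  have Gb: "Y * D f \<approx> D (fs ?b f) * Y" and Gb': "D f * Y \<approx> Y * D (fs ?b f)" for f
    using G2[OF ib] G2'[OF ib] Yb unfolding tw_def by blast+
  have QA: "X * X \<approx> 1 + X * D (\<lambda>k. cc * ee a k)" by (rule quad_conv[OF ia Xa Qa])
  have QB: "Y * Y \<approx> 1 + Y * D (\<lambda>k. cc * ee ?b k)" by (rule quad_conv[OF ib Yb Qb])
  note L = triple[of X a Y ?b "\<lambda>k. cc * ee a k" "gam a" "gam ?b", OF Ga Ga' Gb Gb' QA]
  note R = triple[of Y ?b X a "\<lambda>k. cc * ee ?b k" "gam ?b" "gam a", OF Gb Gb' Ga Ga' QB]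
  have e1: "D (fs ?b (fs a (gam ?b))) = D (gam a)"
    by (rule arg_cong[where f=D]) (auto simp: fs_def gam_def sw_def fun_eq_iff)
  have e2: "D (fs a (fs ?b (gam a))) = D (gam ?b)"
    by (rule arg_cong[where f=D]) (auto simp: fs_def gam_def sw_def fun_eq_iff)
  have e3: "D (\<lambda>k. - (cc * ee a k) * fs a (gam ?b) k + gam ?b k * gam a k + fs a (\<lambda>k. gam a k * gam ?b k) k)
      = D (\<lambda>k. fs a (gam ?b) k * gam ?b k)"
    by (rule arg_cong[where f=D]) (auto simp: fs_def gam_def ee_def sw_def fun_eq_iff)
  have e4: "D (\<lambda>k. - (cc * ee ?b k) * fs ?b (gam a) k + gam a k * gam ?b k + fs ?b (\<lambda>k. gam ?b k * gam a k) k)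
      = D (\<lambda>k. fs ?b (gam a) k * gam a k)"
    by (rule arg_cong[where f=D]) (auto simp: fs_def gam_def ee_def sw_def fun_eq_iff)
  have e5: "D (\<lambda>k. fs a (gam ?b) k + gam a k * gam ?b k * gam a k) = D (\<lambda>k. fs ?b (gam a) k + gam ?b k * gam a k * gam ?b k)"
    by (rule arg_cong[where f=D]) (auto simp: fs_def gam_def sw_def fun_eq_iff)
  have "(X - D (gam a)) * (Y - D (gam ?b)) * (X - D (gam a)) - (Y - D (gam ?b)) * (X - D (gam a)) * (Y - D (gam ?b))
    \<approx> (X * Y * X - X * Y * D (gam a) - Y * X * D (fs a (fs ?b (gam a)))
     + X * D (\<lambda>k. - (cc * ee a k) * fs a (gam ?b) k + gam ?b k * gam a k + fs a (\<lambda>k. gam a k * gam ?b k) k)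
     + Y * D (\<lambda>k. fs ?b (gam a) k * gam a k) - D (\<lambda>k. fs a (gam ?b) k + gam a k * gam ?b k * gam a k))
    - (Y * X * Y - Y * X * D (gam ?b) - X * Y * D (fs ?b (fs a (gam ?b)))
     + Y * D (\<lambda>k. - (cc * ee ?b k) * fs ?b (gam a) k + gam a k * gam ?b k + fs ?b (\<lambda>k. gam ?b k * gam a k) k)
     + X * D (\<lambda>k. fs a (gam ?b) k * gam ?b k) - D (\<lambda>k. fs ?b (gam a) k + gam ?b k * gam a k * gam ?b k))"
    by (rule eqv_diff[OF L R])
  also have "\<dots> = X * Y * X - Y * X * Y"
    unfolding e1 e2 e3 e4 e5 by (simp add: algebra_simps)
  finally show ?thesis .
qed

end

lemma nc_subst_bk: "nc_subst f (bk u r n tg k) = bk u r n (\<lambda>x. nc_subst f (tg x)) k"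
  unfolding bk_def by (simp add: nc_subst_prod_list nc_subst_mult nc_subst_diff o_def del: upt_Suc)

lemma nc_subst_Bprime: "nc_subst f (Bprime u r n q tg i j) = Bprime u r n q (\<lambda>x. nc_subst f (tg x)) i j"
  unfolding Bprime_def by (simp add: nc_subst_mult nc_subst_sum nc_subst_bk)

lemma nc_subst_eel: "nc_subst f (eel u r n tg i) = eel u r n (\<lambda>x. nc_subst f (tg x)) i"
  unfolding eel_def by (simp add: nc_subst_sum nc_subst_bk)

lemma nc_subst_HcG: "nc_subst f (HcG u r q tg j) = HcG u r q (\<lambda>x. nc_subst f (tg x)) j"
  unfolding HcG_def by (simp add: nc_subst_mult nc_subst_sum nc_subst_ncpoly case_prod_unfold)

lemma fa_on_power: "x \<in> fa_on S \<Longrightarrow> x ^ k \<in> (fa_on S :: ('g,'a::comm_ring_1) nc set)"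
  by (induct k) (simp_all add: fa_on_1 fa_on_mult)

lemma fa_on_ncpoly: "x \<in> fa_on S \<Longrightarrow> ncpoly p x \<in> (fa_on S :: ('g,'a::comm_ring_1) nc set)"
  unfolding ncpoly_def by (simp add: fa_on_sum fa_on_mult fa_on_const fa_on_power)

lemma fa_on_bk: "(\<And>i. i \<in> {1..n} \<Longrightarrow> tg i \<in> fa_on S) \<Longrightarrow> bk u r n tg k \<in> (fa_on S :: ('g,'a::comm_ring_1) nc set)"
  unfolding bk_def ncmul_eq ncprod_eq
  by (intro fa_on_prod_list) (auto intro!: fa_on_prod_list fa_on_mult fa_on_const fa_on_diff simp del: upt_Suc)

lemma fa_on_Bprime: "(\<And>i. i \<in> {1..n} \<Longrightarrow> tg i \<in> fa_on S) \<Longrightarrow> Bprime u r n q tg i j \<in> (fa_on S :: ('g,'a::comm_ring_1) nc set)"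
  unfolding Bprime_def ncmul_eq by (intro fa_on_mult fa_on_const fa_on_sum fa_on_bk) auto

lemma fa_on_eel: "(\<And>i. i \<in> {1..n} \<Longrightarrow> tg i \<in> fa_on S) \<Longrightarrow> eel u r n tg i \<in> (fa_on S :: ('g,'a::comm_ring_1) nc set)"
  unfolding eel_def by (intro fa_on_sum fa_on_bk) auto

lemma fa_on_HcG: "tg (j - 1) \<in> fa_on S \<Longrightarrow> tg j \<in> fa_on S \<Longrightarrow> HcG u r q tg j \<in> (fa_on S :: ('g,'a::comm_ring_1) nc set)"
  unfolding HcG_def ncmul_eq case_prod_unfold
  by (intro fa_on_mult fa_on_const fa_on_sum fa_on_ncpoly)

lemma Pt_in: "i \<in> {1..n} \<Longrightarrow> Pt i \<in> Pgens n" by (simp add: Pgens_def)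
lemma Pg_in: "i \<in> {1..n-1} \<Longrightarrow> Pg i \<in> Pgens n" by (simp add: Pgens_def)
lemma Ht_in: "i \<in> {1..n} \<Longrightarrow> Ht i \<in> Hgens n" by (simp add: Hgens_def)
lemma HT_in: "i \<in> {1..n-1} \<Longrightarrow> HT i \<in> Hgens n" by (simp add: Hgens_def)

lemma fa_Pt: "i \<in> {1..n} \<Longrightarrow> ncgen (Pt i) \<in> fa_on (Pgens n)" by (intro fa_on_gen Pt_in)
lemma fa_Pg: "i \<in> {1..n-1} \<Longrightarrow> ncgen (Pg i) \<in> fa_on (Pgens n)" by (intro fa_on_gen Pg_in)
lemma fa_Ht: "i \<in> {1..n} \<Longrightarrow> ncgen (Ht i) \<in> fa_on (Hgens n)" by (intro fa_on_gen Ht_in)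
lemma fa_HT: "i \<in> {1..n-1} \<Longrightarrow> ncgen (HT i) \<in> fa_on (Hgens n)" by (intro fa_on_gen HT_in)

lemma fa_on_prod3: "a \<in> fa_on S \<Longrightarrow> b \<in> fa_on S \<Longrightarrow> c \<in> fa_on S \<Longrightarrow> prod_list [a, b, c] \<in> (fa_on S :: ('g,'a::comm_ring_1) nc set)"
  by (intro fa_on_prod_list) auto

lemma Prels_fa: "Prels u r n q \<subseteq> fa_on (Pgens n)"
proof
  fix \<rho> assume "\<rho> \<in> Prels u r n q"
  then show "\<rho> \<in> fa_on (Pgens n)"
    unfolding Prels_def ncmul_eq ncprod_eq
  proof (elim UnE CollectE bexE conjE disjE)
    fix i assume "i \<in> {1..n}" "\<rho> = prod_list (map (\<lambda>c. ncgen (Pt i) - ncconst (u c)) [1..<Suc r])"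
    then show ?thesis by (auto intro!: fa_on_prod_list fa_on_diff fa_Pt fa_on_const simp del: upt_Suc)
  next
    fix i j assume "i \<in> {1..n}" "j \<in> {1..n}" "\<rho> = ncgen (Pt i) * ncgen (Pt j) - ncgen (Pt j) * ncgen (Pt i)"
    then show ?thesis by (auto intro!: fa_on_diff fa_on_mult fa_Pt)
  next
    fix j i assume "j \<in> {1..n-1}" "i \<in> {1..n}" "\<rho> = ncgen (Pg j) * ncgen (Pt i) - ncgen (Pt (sw j i)) * ncgen (Pg j)"
    then show ?thesis by (auto intro!: fa_on_diff fa_on_mult fa_Pt fa_Pg sw_range)
  next
    fix i j assume "i \<in> {1..n-1}" "j \<in> {1..n-1}" "\<rho> = ncgen (Pg i) * ncgen (Pg j) - ncgen (Pg j) * ncgen (Pg i)"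
    then show ?thesis by (auto intro!: fa_on_diff fa_on_mult fa_Pg)
  next
    fix i j assume "i \<in> {1..n-1}" "j \<in> {1..n-1}" "\<rho> = ncgen (Pg i) * ncgen (Pg j) - ncgen (Pg j) * ncgen (Pg i)"
    then show ?thesis by (auto intro!: fa_on_diff fa_on_mult fa_Pg)
  next
    fix i assume "i \<in> {1..n-2}" "\<rho> = prod_list [ncgen (Pg i), ncgen (Pg (Suc i)), ncgen (Pg i)] - prod_list [ncgen (Pg (Suc i)), ncgen (Pg i), ncgen (Pg (Suc i))]"
    then show ?thesis by (auto intro!: fa_on_diff fa_on_mult fa_Pg)
  next
    fix i assume "i \<in> {1..n-1}" "\<rho> = ncgen (Pg i) * ncgen (Pg i) - ncconst 1 - ncconst (q - ring_inv q) * (eel u r n (\<lambda>i. ncgen (Pt i)) i * ncgen (Pg i))"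
    then show ?thesis by (auto intro!: fa_on_diff fa_on_mult fa_Pg fa_on_const fa_on_eel fa_Pt fa_on_1)
  qed
qed

lemma Hrels_fa: "Hrels u r n q \<subseteq> fa_on (Hgens n)"
proof
  fix \<rho> assume "\<rho> \<in> Hrels u r n q"
  then show "\<rho> \<in> fa_on (Hgens n)"
    unfolding Hrels_def ncmul_eq ncprod_eq Hcorr_HcG
  proof (elim UnE CollectE bexE conjE disjE)
    fix i assume "i \<in> {1..n-1}" "\<rho> = (ncgen (HT i) - ncconst q) * (ncgen (HT i) + ncconst (ring_inv q))"
    then show ?thesis by (auto intro!: fa_on_add fa_on_diff fa_on_mult fa_HT fa_on_const)
  next
    fix i assume "i \<in> {1..n}" "\<rho> = prod_list (map (\<lambda>c. ncgen (Ht i) - ncconst (u c)) [1..<Suc r])"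
    then show ?thesis by (auto intro!: fa_on_prod_list fa_on_diff fa_Ht fa_on_const simp del: upt_Suc)
  next
    fix i assume "i \<in> {1..n-2}" "\<rho> = prod_list [ncgen (HT i), ncgen (HT (Suc i)), ncgen (HT i)] - prod_list [ncgen (HT (Suc i)), ncgen (HT i), ncgen (HT (Suc i))]"
    then show ?thesis by (auto intro!: fa_on_diff fa_on_mult fa_HT)
  next
    fix i j assume "i \<in> {1..n-1}" "j \<in> {1..n-1}" "\<rho> = ncgen (HT i) * ncgen (HT j) - ncgen (HT j) * ncgen (HT i)"
    then show ?thesis by (auto intro!: fa_on_diff fa_on_mult fa_HT)
  next
    fix i j assume "i \<in> {1..n-1}" "j \<in> {1..n-1}" "\<rho> = ncgen (HT i) * ncgen (HT j) - ncgen (HT j) * ncgen (HT i)"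
    then show ?thesis by (auto intro!: fa_on_diff fa_on_mult fa_HT)
  next
    fix i j assume "i \<in> {1..n}" "j \<in> {1..n}" "\<rho> = ncgen (Ht i) * ncgen (Ht j) - ncgen (Ht j) * ncgen (Ht i)"
    then show ?thesis by (auto intro!: fa_on_diff fa_on_mult fa_Ht)
  next
    fix j k assume "j \<in> {1..n-1}" "k \<in> {1..n}" "\<rho> = ncgen (HT j) * ncgen (Ht k) - ncgen (Ht k) * ncgen (HT j)"
    then show ?thesis by (auto intro!: fa_on_diff fa_on_mult fa_Ht fa_HT)
  next
    fix j assume "j \<in> {2..n}" "\<rho> = ncgen (HT (j - 1)) * ncgen (Ht j) - ncgen (Ht (j - 1)) * ncgen (HT (j - 1)) - HcG u r q (\<lambda>i. ncgen (Ht i)) j"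
    then show ?thesis by (auto intro!: fa_on_diff fa_on_mult fa_Ht fa_HT fa_on_HcG)
  next
    fix j assume "j \<in> {2..n}" "\<rho> = ncgen (HT (j - 1)) * ncgen (Ht (j - 1)) - ncgen (Ht j) * ncgen (HT (j - 1)) + HcG u r q (\<lambda>i. ncgen (Ht i)) j"
    then show ?thesis by (auto intro!: fa_on_add fa_on_diff fa_on_mult fa_Ht fa_HT fa_on_HcG)
  qed
qed

lemma quad_expand:
  assumes "q dvd 1"
  shows "(T - ncconst q) * (T + ncconst (ring_inv q)) = T * T - ncconst (q - ring_inv q) * T - (1::('g,'a::idom) nc)"
proof -
  have c: "T * ncconst (ring_inv q) = ncconst (ring_inv q) * T" by (simp add: ncconst_central)
  have d: "ncconst q * ncconst (ring_inv q) = (1::('g,'a) nc)" using ring_inv_eq[OF assms] by (simp flip: ncconst_mult)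
  show ?thesis by (simp add: algebra_simps ncconst_diff c d)
qed

context fixes u :: "nat \<Rightarrow> 'a::idom" and r n :: nat and q :: 'a
begin

lemma Hrel_quad: "i \<in> {1..n-1} \<Longrightarrow> (ncgen (HT i) - ncconst q) * (ncgen (HT i) + ncconst (ring_inv q)) \<in> Hrels u r n q"
  unfolding Hrels_def ncmul_eq by blast
lemma Hrel_min: "i \<in> {1..n} \<Longrightarrow> prod_list (map (\<lambda>c. ncgen (Ht i) - ncconst (u c)) [1..<Suc r]) \<in> Hrels u r n q"
  unfolding Hrels_def ncprod_eq by blast
lemma Hrel_braid: "i \<in> {1..n-2} \<Longrightarrow> ncgen (HT i) * (ncgen (HT (Suc i)) * ncgen (HT i)) - ncgen (HT (Suc i)) * (ncgen (HT i) * ncgen (HT (Suc i))) \<in> Hrels u r n q"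
  unfolding Hrels_def ncprod_eq by auto
lemma Hrel_far: "i \<in> {1..n-1} \<Longrightarrow> j \<in> {1..n-1} \<Longrightarrow> i + 2 \<le> j \<or> j + 2 \<le> i \<Longrightarrow> ncgen (HT i) * ncgen (HT j) - ncgen (HT j) * ncgen (HT i) \<in> Hrels u r n q"
  unfolding Hrels_def ncmul_eq by blast
lemma Hrel_tcomm: "i \<in> {1..n} \<Longrightarrow> j \<in> {1..n} \<Longrightarrow> ncgen (Ht i) * ncgen (Ht j) - ncgen (Ht j) * ncgen (Ht i) \<in> Hrels u r n q"
  unfolding Hrels_def ncmul_eq by blast
lemma Hrel_Tt: "j \<in> {1..n-1} \<Longrightarrow> k \<in> {1..n} \<Longrightarrow> k \<noteq> j \<Longrightarrow> k \<noteq> Suc j \<Longrightarrow> ncgen (HT j) * ncgen (Ht k) - ncgen (Ht k) * ncgen (HT j) \<in> Hrels u r n q"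
  unfolding Hrels_def ncmul_eq by blast
lemma Hrel_c1: "j \<in> {2..n} \<Longrightarrow> ncgen (HT (j - 1)) * ncgen (Ht j) - ncgen (Ht (j - 1)) * ncgen (HT (j - 1)) - HcG u r q (\<lambda>i. ncgen (Ht i)) j \<in> Hrels u r n q"
  unfolding Hrels_def ncmul_eq Hcorr_HcG by blast
lemma Hrel_c2: "j \<in> {2..n} \<Longrightarrow> ncgen (HT (j - 1)) * ncgen (Ht (j - 1)) - ncgen (Ht j) * ncgen (HT (j - 1)) + HcG u r q (\<lambda>i. ncgen (Ht i)) j \<in> Hrels u r n q"
  unfolding Hrels_def ncmul_eq Hcorr_HcG by blast

lemma Prel_min: "i \<in> {1..n} \<Longrightarrow> prod_list (map (\<lambda>c. ncgen (Pt i) - ncconst (u c)) [1..<Suc r]) \<in> Prels u r n q"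
  unfolding Prels_def ncprod_eq by blast
lemma Prel_tcomm: "i \<in> {1..n} \<Longrightarrow> j \<in> {1..n} \<Longrightarrow> ncgen (Pt i) * ncgen (Pt j) - ncgen (Pt j) * ncgen (Pt i) \<in> Prels u r n q"
  unfolding Prels_def ncmul_eq by blast
lemma Prel_gt: "j \<in> {1..n-1} \<Longrightarrow> i \<in> {1..n} \<Longrightarrow> ncgen (Pg j) * ncgen (Pt i) - ncgen (Pt (sw j i)) * ncgen (Pg j) \<in> Prels u r n q"
  unfolding Prels_def ncmul_eq by blast
lemma Prel_far: "i \<in> {1..n-1} \<Longrightarrow> j \<in> {1..n-1} \<Longrightarrow> i + 2 \<le> j \<or> j + 2 \<le> i \<Longrightarrow> ncgen (Pg i) * ncgen (Pg j) - ncgen (Pg j) * ncgen (Pg i) \<in> Prels u r n q"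
  unfolding Prels_def ncmul_eq by blast
lemma Prel_braid: "i \<in> {1..n-2} \<Longrightarrow> ncgen (Pg i) * (ncgen (Pg (Suc i)) * ncgen (Pg i)) - ncgen (Pg (Suc i)) * (ncgen (Pg i) * ncgen (Pg (Suc i))) \<in> Prels u r n q"
  unfolding Prels_def ncprod_eq by auto
lemma Prel_quad: "i \<in> {1..n-1} \<Longrightarrow> ncgen (Pg i) * ncgen (Pg i) - 1 - ncconst (q - ring_inv q) * (eel u r n (\<lambda>i. ncgen (Pt i)) i * ncgen (Pg i)) \<in> Prels u r n q"
  unfolding Prels_def ncmul_eq ncconst_1 by blast

end

lemma H_side:
  fixes q :: "'a::idom" and u :: "nat \<Rightarrow> 'a" and n r :: nat
  assumes r1: "r \<ge> 1" and Dn: "Delta u r dvd 1" and qu: "q dvd 1" and rho: "\<rho> \<in> Prels u r n q"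
  shows "nc_subst (psi_gen u r n q) \<rho> \<in> JU (Hrels u r n q)"
proof -
  let ?R = "Hrels u r n q"
  let ?t = "\<lambda>i. ncgen (Ht i) :: (hgen, 'a) nc"
  let ?E = "ncrel.eqv ?R"
  interpret hsys ?R u r n ?t q
  proof unfold_locales
    show "1 \<le> r" using r1 by simp
    show "Delta u r dvd 1" by (rule Dn)
    show "q dvd 1" by (rule qu)
  next
    fix i j assume "i \<in> {1..n}" "j \<in> {1..n}"
    then show "ncrel.eqv ?R (ncgen (Ht i) * ncgen (Ht j)) (ncgen (Ht j) * ncgen (Ht i))"
      unfolding ncrel.eqv_def by (intro JU_rel Hrel_tcomm)
  next
    fix i assume "i \<in> {1..n}"
    then show "prod_list (map (\<lambda>c. ncgen (Ht i) - ncconst (u c)) [1..<Suc r]) \<in> JU ?R"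
      by (intro JU_rel Hrel_min)
  qed
  define X where "X i = ncgen (HT i) + D (gam i)" for i
  have XT: "X i - D (gam i) = ncgen (HT i)" for i by (simp add: X_def)
  have psiPt: "psi_gen u r n q (Pt i) = ncgen (Ht i)" for i by (simp add: psi_gen_def)
  have psiPg: "psi_gen u r n q (Pg i) = X i" for i by (simp add: psi_gen_def X_def Bprime_D)
  have relJ: "x \<in> ?R \<Longrightarrow> ?E x 0" for x by (rule eqv_rel)
  have twX: "tw i (X i)" if i: "i \<in> {1..n-1}" for i
    unfolding tw_def
  proof
    fix m assume m: "m \<in> {1..n}"
    have Rt: "?E (ncgen (HT i) * ?t m - ?t (sw i m) * ncgen (HT i) - D (corr i m)) (X i * ?t m - ?t (sw i m) * X i)"
      using R_t[OF i m, of "X i"] by (simp only: XT)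
    have "?E (ncgen (HT i) * ?t m - ?t (sw i m) * ncgen (HT i) - D (corr i m)) (0)"
    proof (cases "m = Suc i")
      case True
      have j: "Suc i \<in> {2..n}" using i by auto
      have c: "?E (HcG u r q ?t (Suc i)) (D (hh i))" using HcG_D[OF j] by simp
      have "ncgen (HT i) * ?t m - ?t (sw i m) * ncgen (HT i) - D (corr i m)
         = (ncgen (HT (Suc i - 1)) * ?t (Suc i) - ?t (Suc i - 1) * ncgen (HT (Suc i - 1)) - HcG u r q ?t (Suc i)) + (HcG u r q ?t (Suc i) - D (hh i))"
        using True by (simp add: corr_def sw_def)
      also have "?E (\<dots>) (0 + (D (hh i) - D (hh i)))"
        by (intro eqv_add eqv_diff relJ Hrel_c1 j c eqv_refl)
      finally show ?thesis by simp
    next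
      case F1: False
      show ?thesis
      proof (cases "m = i")
        case True
        have j: "Suc i \<in> {2..n}" using i by auto
        have c: "?E (HcG u r q ?t (Suc i)) (D (hh i))" using HcG_D[OF j] by simp
        have "ncgen (HT i) * ?t m - ?t (sw i m) * ncgen (HT i) - D (corr i m)
           = (ncgen (HT (Suc i - 1)) * ?t (Suc i - 1) - ?t (Suc i) * ncgen (HT (Suc i - 1)) + HcG u r q ?t (Suc i)) - (HcG u r q ?t (Suc i) - D (hh i))"
          using True by (simp add: corr_def sw_def D_uminus)
        also have "?E (\<dots>) (0 - (D (hh i) - D (hh i)))"
          by (intro eqv_add eqv_diff relJ Hrel_c2 j c eqv_refl)
        finally show ?thesis by simp
      next
        case False
        have "ncgen (HT i) * ?t m - ?t (sw i m) * ncgen (HT i) - D (corr i m) = ncgen (HT i) * ?t m - ?t m * ncgen (HT i)"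
          using False F1 by (simp add: corr_def sw_def D_0)
        also have "?E (\<dots>) (0)" using i m False F1 by (intro relJ Hrel_Tt) auto
        finally show ?thesis .
      qed
    qed
    then have "?E (X i * ?t m - ?t (sw i m) * X i) (0)" using Rt by (meson eqv_sym eqv_trans)
    then show "?E (X i * ?t m) (?t (sw i m) * X i)" by (simp add: eqv_iff0[symmetric])
  qed
  have quadX: "?E (X i * X i - 1 - ncconst cc * (D (ee i) * X i)) (0)" if i: "i \<in> {1..n-1}" for i
  proof -
    have "?E (X i * X i - 1 - ncconst cc * (D (ee i) * X i)) (ncgen (HT i) * ncgen (HT i) - ncconst cc * ncgen (HT i) - 1)"
      using R_quad[OF i twX[OF i]] by (simp only: XT) (rule eqv_sym)
    also have "\<dots> = (ncgen (HT i) - ncconst q) * (ncgen (HT i) + ncconst (ring_inv q))"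
      by (simp add: quad_expand[OF qu] cc_def)
    also have "?E (\<dots>) (0)" using i by (intro relJ Hrel_quad)
    finally show ?thesis .
  qed
  have "?E (nc_subst (psi_gen u r n q) \<rho>) (0)"
    using rho unfolding Prels_def ncmul_eq ncprod_eq ncconst_1
  proof (elim UnE CollectE bexE conjE)
    fix i assume i: "i \<in> {1..n}" and e: "\<rho> = prod_list (map (\<lambda>c. ncgen (Pt i) - ncconst (u c)) [1..<Suc r])"
    have "nc_subst (psi_gen u r n q) \<rho> = prod_list (map (\<lambda>c. ncgen (Ht i) - ncconst (u c)) [1..<Suc r])"
      by (simp add: e nc_subst_prod_list nc_subst_diff psiPt o_def del: upt_Suc)
    also have "?E (\<dots>) (0)" using i by (intro relJ Hrel_min)
    finally show ?thesis .
  next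
    fix i j assume i: "i \<in> {1..n}" and j: "j \<in> {1..n}" and e: "\<rho> = ncgen (Pt i) * ncgen (Pt j) - ncgen (Pt j) * ncgen (Pt i)"
    have "nc_subst (psi_gen u r n q) \<rho> = ncgen (Ht i) * ncgen (Ht j) - ncgen (Ht j) * ncgen (Ht i)"
      by (simp add: e nc_subst_mult nc_subst_diff psiPt)
    also have "?E (\<dots>) (0)" using i j by (intro relJ Hrel_tcomm)
    finally show ?thesis .
  next
    fix j i assume j: "j \<in> {1..n-1}" and i: "i \<in> {1..n}" and e: "\<rho> = ncgen (Pg j) * ncgen (Pt i) - ncgen (Pt (sw j i)) * ncgen (Pg j)"
    have "nc_subst (psi_gen u r n q) \<rho> = X j * ?t i - ?t (sw j i) * X j"
      by (simp add: e nc_subst_mult nc_subst_diff psiPt psiPg)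
    also have "?E (\<dots>) (0)" using twX[OF j] i unfolding tw_def by (simp add: eqv_iff0[symmetric])
    finally show ?thesis .
  next
    fix i j assume i: "i \<in> {1..n-1}" and j: "j \<in> {1..n-1}" and ij: "i + 2 \<le> j \<or> j + 2 \<le> i"
      and e: "\<rho> = ncgen (Pg i) * ncgen (Pg j) - ncgen (Pg j) * ncgen (Pg i)"
    have "nc_subst (psi_gen u r n q) \<rho> = X i * X j - X j * X i"
      by (simp add: e nc_subst_mult nc_subst_diff psiPg)
    also have "?E (\<dots>) (ncgen (HT i) * ncgen (HT j) - ncgen (HT j) * ncgen (HT i))"
      using R_far[OF i j ij twX[OF i] twX[OF j]] by (simp only: XT) (rule eqv_sym)
    also have "?E (\<dots>) (0)" using i j ij by (intro relJ Hrel_far)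
    finally show ?thesis .
  next
    fix i assume i: "i \<in> {1..n-2}"
      and e: "\<rho> = prod_list [ncgen (Pg i), ncgen (Pg (Suc i)), ncgen (Pg i)] - prod_list [ncgen (Pg (Suc i)), ncgen (Pg i), ncgen (Pg (Suc i))]"
    have i1: "i \<in> {1..n-1}" "Suc i \<in> {1..n-1}" using i by auto
    have "nc_subst (psi_gen u r n q) \<rho> = X i * X (Suc i) * X i - X (Suc i) * X i * X (Suc i)"
      by (simp add: e nc_subst_mult nc_subst_diff psiPg mult.assoc)
    also have "?E (\<dots>) (ncgen (HT i) * ncgen (HT (Suc i)) * ncgen (HT i) - ncgen (HT (Suc i)) * ncgen (HT i) * ncgen (HT (Suc i)))"
      using R_braid[OF i twX[OF i1(1)] twX[OF i1(2)] quadX[OF i1(1)] quadX[OF i1(2)]] by (simp only: XT) (rule eqv_sym)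
    also have "?E (\<dots>) (0)" using i by (simp add: mult.assoc relJ Hrel_braid)
    finally show ?thesis .
  next
    fix i assume i: "i \<in> {1..n-1}"
      and e: "\<rho> = ncgen (Pg i) * ncgen (Pg i) - 1 - ncconst (q - ring_inv q) * (eel u r n (\<lambda>i. ncgen (Pt i)) i * ncgen (Pg i))"
    have "nc_subst (psi_gen u r n q) \<rho> = X i * X i - 1 - ncconst cc * (D (ee i) * X i)"
      by (simp add: e nc_subst_mult nc_subst_diff psiPg psiPt nc_subst_eel eel_D cc_def)
    also have "?E (\<dots>) (0)" using i by (rule quadX)
    finally show ?thesis .
  qed
  then show ?thesis by (simp add: eqv_def)
qed

definition phi_gen :: "(nat \<Rightarrow> 'a::comm_ring_1) \<Rightarrow> nat \<Rightarrow> nat \<Rightarrow> 'a \<Rightarrow> hgen \<Rightarrow> (pgen, 'a) nc" where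
  "phi_gen u r n q h = (case h of Ht i \<Rightarrow> ncgen (Pt i)
      | HT i \<Rightarrow> ncgen (Pg i) - Bprime u r n q (\<lambda>i. ncgen (Pt i)) i (Suc i))"

lemma P_side:
  fixes q :: "'a::idom" and u :: "nat \<Rightarrow> 'a" and n r :: nat
  assumes r1: "r \<ge> 1" and Dn: "Delta u r dvd 1" and qu: "q dvd 1" and rho: "\<rho> \<in> Hrels u r n q"
  shows "nc_subst (phi_gen u r n q) \<rho> \<in> JU (Prels u r n q)"
proof -
  let ?R = "Prels u r n q"
  let ?t = "\<lambda>i. ncgen (Pt i) :: (pgen, 'a) nc"
  let ?E = "ncrel.eqv ?R"
  interpret hsys ?R u r n ?t q
  proof unfold_locales
    show "1 \<le> r" using r1 by simp
    show "Delta u r dvd 1" by (rule Dn)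
    show "q dvd 1" by (rule qu)
  next
    fix i j assume "i \<in> {1..n}" "j \<in> {1..n}"
    then show "ncrel.eqv ?R (ncgen (Pt i) * ncgen (Pt j)) (ncgen (Pt j) * ncgen (Pt i))"
      unfolding ncrel.eqv_def by (intro JU_rel Prel_tcomm)
  next
    fix i assume "i \<in> {1..n}"
    then show "prod_list (map (\<lambda>c. ncgen (Pt i) - ncconst (u c)) [1..<Suc r]) \<in> JU ?R"
      by (intro JU_rel Prel_min)
  qed
  define T where "T i = ncgen (Pg i) - D (gam i)" for i
  have phiHt: "phi_gen u r n q (Ht i) = ncgen (Pt i)" for i by (simp add: phi_gen_def)
  have phiHT: "phi_gen u r n q (HT i) = T i" for i by (simp add: phi_gen_def T_def Bprime_D)
  have relJ: "x \<in> ?R \<Longrightarrow> ?E x 0" for x by (rule eqv_rel)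
  have twX: "tw i (ncgen (Pg i))" if i: "i \<in> {1..n-1}" for i
    unfolding tw_def
  proof
    fix m assume m: "m \<in> {1..n}"
    have "?E (ncgen (Pg i) * ?t m - ?t (sw i m) * ncgen (Pg i)) 0" using i m by (intro relJ Prel_gt)
    then show "?E (ncgen (Pg i) * ?t m) (?t (sw i m) * ncgen (Pg i))" by (simp add: eqv_iff0[symmetric])
  qed
  have quadX: "?E (ncgen (Pg i) * ncgen (Pg i) - 1 - ncconst cc * (D (ee i) * ncgen (Pg i))) 0" if i: "i \<in> {1..n-1}" for i
    using relJ[OF Prel_quad[OF i]] by (simp add: eel_D cc_def)
  have Rt: "?E (T i * ?t m - ?t (sw i m) * T i - D (corr i m)) 0" if i: "i \<in> {1..n-1}" and m: "m \<in> {1..n}" for i m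
  proof -
    have "?E (T i * ?t m - ?t (sw i m) * T i - D (corr i m)) (ncgen (Pg i) * ?t m - ?t (sw i m) * ncgen (Pg i))"
      unfolding T_def by (rule R_t[OF i m])
    also have "?E \<dots> 0" using i m by (intro relJ Prel_gt)
    finally show ?thesis .
  qed
  have "?E (nc_subst (phi_gen u r n q) \<rho>) 0"
    using rho unfolding Hrels_def ncmul_eq ncprod_eq Hcorr_HcG
  proof (elim UnE CollectE bexE conjE)
    fix i assume i: "i \<in> {1..n-1}" and e: "\<rho> = (ncgen (HT i) - ncconst q) * (ncgen (HT i) + ncconst (ring_inv q))"
    have "nc_subst (phi_gen u r n q) \<rho> = T i * T i - ncconst cc * T i - 1"
      by (simp add: e nc_subst_mult nc_subst_diff nc_subst_add phiHT quad_expand[OF qu] cc_def)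
    also have "?E \<dots> (ncgen (Pg i) * ncgen (Pg i) - 1 - ncconst cc * (D (ee i) * ncgen (Pg i)))"
      unfolding T_def by (rule R_quad[OF i twX[OF i]])
    also have "?E \<dots> 0" by (rule quadX[OF i])
    finally show ?thesis .
  next
    fix i assume i: "i \<in> {1..n}" and e: "\<rho> = prod_list (map (\<lambda>c. ncgen (Ht i) - ncconst (u c)) [1..<Suc r])"
    have "nc_subst (phi_gen u r n q) \<rho> = prod_list (map (\<lambda>c. ncgen (Pt i) - ncconst (u c)) [1..<Suc r])"
      by (simp add: e nc_subst_prod_list nc_subst_diff phiHt o_def del: upt_Suc)
    also have "?E \<dots> 0" using i by (intro relJ Prel_min)
    finally show ?thesis .
  next
    fix i assume i: "i \<in> {1..n-2}"
      and e: "\<rho> = prod_list [ncgen (HT i), ncgen (HT (Suc i)), ncgen (HT i)] - prod_list [ncgen (HT (Suc i)), ncgen (HT i), ncgen (HT (Suc i))]"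
    have i1: "i \<in> {1..n-1}" "Suc i \<in> {1..n-1}" using i by auto
    have "nc_subst (phi_gen u r n q) \<rho> = T i * T (Suc i) * T i - T (Suc i) * T i * T (Suc i)"
      by (simp add: e nc_subst_mult nc_subst_diff phiHT mult.assoc)
    also have "?E \<dots> (ncgen (Pg i) * ncgen (Pg (Suc i)) * ncgen (Pg i) - ncgen (Pg (Suc i)) * ncgen (Pg i) * ncgen (Pg (Suc i)))"
      unfolding T_def by (rule R_braid[OF i twX[OF i1(1)] twX[OF i1(2)] quadX[OF i1(1)] quadX[OF i1(2)]])
    also have "?E \<dots> 0" using i by (simp add: mult.assoc relJ Prel_braid)
    finally show ?thesis .
  next
    fix i j assume i: "i \<in> {1..n-1}" and j: "j \<in> {1..n-1}" and ij: "i + 2 \<le> j \<or> j + 2 \<le> i"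
      and e: "\<rho> = ncgen (HT i) * ncgen (HT j) - ncgen (HT j) * ncgen (HT i)"
    have "nc_subst (phi_gen u r n q) \<rho> = T i * T j - T j * T i"
      by (simp add: e nc_subst_mult nc_subst_diff phiHT)
    also have "?E \<dots> (ncgen (Pg i) * ncgen (Pg j) - ncgen (Pg j) * ncgen (Pg i))"
      unfolding T_def by (rule R_far[OF i j ij twX[OF i] twX[OF j]])
    also have "?E \<dots> 0" using i j ij by (intro relJ Prel_far)
    finally show ?thesis .
  next
    fix i j assume i: "i \<in> {1..n}" and j: "j \<in> {1..n}" and e: "\<rho> = ncgen (Ht i) * ncgen (Ht j) - ncgen (Ht j) * ncgen (Ht i)"
    have "nc_subst (phi_gen u r n q) \<rho> = ncgen (Pt i) * ncgen (Pt j) - ncgen (Pt j) * ncgen (Pt i)"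
      by (simp add: e nc_subst_mult nc_subst_diff phiHt)
    also have "?E \<dots> 0" using i j by (intro relJ Prel_tcomm)
    finally show ?thesis .
  next
    fix j k assume j: "j \<in> {1..n-1}" and k: "k \<in> {1..n}" and kj: "k \<noteq> j" "k \<noteq> Suc j"
      and e: "\<rho> = ncgen (HT j) * ncgen (Ht k) - ncgen (Ht k) * ncgen (HT j)"
    have "nc_subst (phi_gen u r n q) \<rho> = T j * ?t k - ?t (sw j k) * T j - D (corr j k)"
      using kj by (simp add: e nc_subst_mult nc_subst_diff phiHT phiHt sw_def corr_def D_0)
    also have "?E \<dots> 0" by (rule Rt[OF j k])
    finally show ?thesis .
  next
    fix j assume j: "j \<in> {2..n}"
      and e: "\<rho> = ncgen (HT (j - 1)) * ncgen (Ht j) - ncgen (Ht (j - 1)) * ncgen (HT (j - 1)) - HcG u r q (\<lambda>i. ncgen (Ht i)) j"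
    define i where "i = j - 1"
    have ji: "j = Suc i" and i: "i \<in> {1..n-1}" and m: "j \<in> {1..n}" using j by (auto simp: i_def)
    have hc: "nc_subst (phi_gen u r n q) (HcG u r q (\<lambda>i. ncgen (Ht i)) (Suc i)) = HcG u r q ?t (Suc i)"
      by (simp add: nc_subst_HcG phiHt)
    have c: "?E (HcG u r q ?t j) (D (hh i))" using HcG_D[OF j] by (simp add: i_def)
    have "nc_subst (phi_gen u r n q) \<rho> = (T i * ?t j - ?t (sw i j) * T i - D (corr i j)) - (HcG u r q ?t j - D (hh i))"
      by (simp add: e nc_subst_mult nc_subst_diff phiHT phiHt hc ji sw_def corr_def flip: i_def)
    also have "?E \<dots> (0 - (D (hh i) - D (hh i)))"
      by (intro eqv_diff Rt[OF i m] c eqv_refl)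
    finally show ?thesis by simp
  next
    fix j assume j: "j \<in> {2..n}"
      and e: "\<rho> = ncgen (HT (j - 1)) * ncgen (Ht (j - 1)) - ncgen (Ht j) * ncgen (HT (j - 1)) + HcG u r q (\<lambda>i. ncgen (Ht i)) j"
    define i where "i = j - 1"
    have ji: "j = Suc i" and i: "i \<in> {1..n-1}" and m: "i \<in> {1..n}" using j by (auto simp: i_def)
    have hc: "nc_subst (phi_gen u r n q) (HcG u r q (\<lambda>i. ncgen (Ht i)) (Suc i)) = HcG u r q ?t (Suc i)"
      by (simp add: nc_subst_HcG phiHt)
    have c: "?E (HcG u r q ?t j) (D (hh i))" using HcG_D[OF j] by (simp add: i_def)
    have "nc_subst (phi_gen u r n q) \<rho> = (T i * ?t i - ?t (sw i i) * T i - D (corr i i)) + (HcG u r q ?t j - D (hh i))"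
      by (simp add: e nc_subst_mult nc_subst_diff nc_subst_add phiHT phiHt hc ji sw_def corr_def D_uminus flip: i_def)
    also have "?E \<dots> (0 + (D (hh i) - D (hh i)))"
      by (intro eqv_add eqv_diff Rt[OF i m] c eqv_refl)
    finally show ?thesis by simp
  qed
  then show ?thesis by (simp add: eqv_def)
qed

lemma phi_psi: "nc_subst (phi_gen u r n q) (nc_subst (psi_gen u r n q) x) = x"
proof -
  have "(\<lambda>g. nc_subst (phi_gen u r n q) (psi_gen u r n q g)) = ncgen"
  proof
    fix g show "nc_subst (phi_gen u r n q) (psi_gen u r n q g) = ncgen g"
      by (cases g) (simp_all add: psi_gen_def phi_gen_def nc_subst_add nc_subst_Bprime)
  qed
  then show ?thesis by (simp add: nc_subst_comp nc_subst_id)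
qed

lemma psi_phi: "nc_subst (psi_gen u r n q) (nc_subst (phi_gen u r n q) x) = x"
proof -
  have "(\<lambda>g. nc_subst (psi_gen u r n q) (phi_gen u r n q g)) = ncgen"
  proof
    fix g show "nc_subst (psi_gen u r n q) (phi_gen u r n q g) = ncgen g"
      by (cases g) (simp_all add: psi_gen_def phi_gen_def nc_subst_diff nc_subst_Bprime)
  qed
  then show ?thesis by (simp add: nc_subst_comp nc_subst_id)
qed

lemma psi_fa: "x \<in> fa_on (Pgens n) \<Longrightarrow> nc_subst (psi_gen u r n q) x \<in> fa_on (Hgens n)"
  by (rule fa_on_subst) (auto simp: Pgens_def psi_gen_def intro!: fa_on_add fa_HT fa_Ht fa_on_Bprime)

lemma phi_fa: "x \<in> fa_on (Hgens n) \<Longrightarrow> nc_subst (phi_gen u r n q) x \<in> fa_on (Pgens n)"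
  by (rule fa_on_subst) (auto simp: Hgens_def phi_gen_def intro!: fa_on_diff fa_Pg fa_Pt fa_on_Bprime)

theorem theorem3p11:
  fixes q :: "'a::idom" and u :: "nat \<Rightarrow> 'a" and n r :: nat
  assumes "n \<ge> 1" and "r \<ge> 1" and "q dvd 1" and "Delta u r dvd 1"
  shows "(\<forall>x\<in>fa_on (Pgens n).
            nc_subst (psi_gen u r n q) x \<in> nc_ideal (Hgens n) (Hrels u r n q)
            \<longleftrightarrow> x \<in> nc_ideal (Pgens n) (Prels u r n q))
       \<and> (\<forall>y\<in>fa_on (Hgens n). \<exists>x\<in>fa_on (Pgens n).
            y - nc_subst (psi_gen u r n q) x \<in> nc_ideal (Hgens n) (Hrels u r n q))"
proof (intro conjI ballI)
  fix x :: "(pgen, 'a) nc" assume x: "x \<in> fa_on (Pgens n)"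
  show "nc_subst (psi_gen u r n q) x \<in> nc_ideal (Hgens n) (Hrels u r n q)
            \<longleftrightarrow> x \<in> nc_ideal (Pgens n) (Prels u r n q)"
  proof
    assume h: "nc_subst (psi_gen u r n q) x \<in> nc_ideal (Hgens n) (Hrels u r n q)"
    have "nc_subst (phi_gen u r n q) (nc_subst (psi_gen u r n q) x) \<in> JU (Prels u r n q)"
      using nc_ideal_UNIV[OF h] by (rule subst_JU) (rule P_side[OF assms(2,4,3)])
    then have "x \<in> JU (Prels u r n q)" by (simp only: phi_psi)
    then show "x \<in> nc_ideal (Pgens n) (Prels u r n q)" using Prels_fa x by (rule JU_to_ideal)
  next
    assume h: "x \<in> nc_ideal (Pgens n) (Prels u r n q)"
    have "nc_subst (psi_gen u r n q) x \<in> JU (Hrels u r n q)"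
      using nc_ideal_UNIV[OF h] by (rule subst_JU) (rule H_side[OF assms(2,4,3)])
    then show "nc_subst (psi_gen u r n q) x \<in> nc_ideal (Hgens n) (Hrels u r n q)"
      using Hrels_fa psi_fa[OF x] by (rule JU_to_ideal)
  qed
next
  fix y :: "(hgen, 'a) nc" assume y: "y \<in> fa_on (Hgens n)"
  show "\<exists>x\<in>fa_on (Pgens n). y - nc_subst (psi_gen u r n q) x \<in> nc_ideal (Hgens n) (Hrels u r n q)"
  proof
    show "nc_subst (phi_gen u r n q) y \<in> fa_on (Pgens n)" using y by (rule phi_fa)
    show "y - nc_subst (psi_gen u r n q) (nc_subst (phi_gen u r n q) y) \<in> nc_ideal (Hgens n) (Hrels u r n q)"
      by (simp add: psi_phi nc_ideal.zero)
  qed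
qed

end
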